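(* Let $0\le z<t\le n$ and consider any $((t,n;z))_q$ QSS scheme whose secret consists of $m$ qudits. Then for every authorized set $A\subseteq[n]$, the communication cost of secret recovery from $A$ satisfies $$\mathrm{CC}_n(A)\geq\frac{|A|\,m}{|A|-z}.$$
   Context: A QSS scheme on $n$ parties is an encoding of a quantum secret into $n$ shares, share $j$ given to party $j\in[n]$. A set $P\subseteq[n]$ is authorized if the secret can be recovered from the shares of the parties in $P$, and unauthorized if those shares contain no information about the secret. For $0\le z<t\le n$, a $((t,n;z))_q$ QSS scheme is one in which every set of at least $t$ parties is authorized, every set of at most $z$ parties is unauthorized, and the secret consists of $m$ qudits and the $j$-th share of $w_j$ qudits, all of dimension $q$. For an authorized set $A$, a fixed (a priori) portion of each share of a party in $A$ is sent to a combiner, which recovers the secret from these qudits; the communication cost is $\mathrm{CC}_n(A)=\sum_{j\in A}h_{j,A}$, where $h_{j,A}$ is the number of qudits sent by party $j$. *)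

theory Defs
  imports Complex_Main
begin

text \<open>A system of k qudits of
dimension q has Hilbert space of dimension q^k; operators on it are represented
as functions nat => nat => complex (matrix entries), required to vanish outside
the index range.  The basis index i < q^k encodes the digit string
(digit q i 0, ..., digit q i (k-1)), the digit at position p being the state of
qudit p.\<close>

type_synonym cmat = "nat \<Rightarrow> nat \<Rightarrow> complex"

definition digit :: "nat \<Rightarrow> nat \<Rightarrow> nat \<Rightarrow> nat" where
  "digit q a k = (a div q ^ k) mod q"

definition density :: "nat \<Rightarrow> cmat \<Rightarrow> bool" where
  "density d \<rho> \<longleftrightarrow>
     (\<forall>i j. \<not> (i < d \<and> j < d) \<longrightarrow> \<rho> i j = 0) \<and>
     (\<Sum>i<d. \<rho> i i) = 1 \<and>
     (\<forall>v :: nat \<Rightarrow> complex.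
        Im (\<Sum>i<d. \<Sum>j<d. cnj (v i) * \<rho> i j * v j) = 0 \<and>
        Re (\<Sum>i<d. \<Sum>j<d. cnj (v i) * \<rho> i j * v j) \<ge> 0)"

text \<open>Quantum channels (CPTP maps) in Kraus form: a finite list of Kraus
operators K (dout x din) with sum K^H K = identity.\<close>
definition is_channel :: "nat \<Rightarrow> nat \<Rightarrow> cmat list \<Rightarrow> bool" where
  "is_channel din dout Ks \<longleftrightarrow>
     (\<forall>i<din. \<forall>j<din.
        (\<Sum>K\<leftarrow>Ks. \<Sum>k<dout. cnj (K k i) * K k j) = (if i = j then 1 else 0))"

definition apply_channel :: "nat \<Rightarrow> nat \<Rightarrow> cmat list \<Rightarrow> cmat \<Rightarrow> cmat" where
  "apply_channel din dout Ks \<rho> = (\<lambda>a b.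
     if a < dout \<and> b < dout
     then (\<Sum>K\<leftarrow>Ks. \<Sum>i<din. \<Sum>j<din. K a i * \<rho> i j * cnj (K b j))
     else 0)"

text \<open>Partial trace of a W-qudit operator onto the qudit positions S
(kept in increasing order of position), tracing out the rest.\<close>
definition rank_in :: "nat set \<Rightarrow> nat \<Rightarrow> nat" where
  "rank_in S k = card {x \<in> S. x < k}"

definition merge_idx :: "nat \<Rightarrow> nat \<Rightarrow> nat set \<Rightarrow> nat \<Rightarrow> nat \<Rightarrow> nat" where
  "merge_idx q W S a c =
     (\<Sum>k<W. q ^ k * (if k \<in> S then digit q a (rank_in S k)
                        else digit q c (rank_in ({..<W} - S) k)))"

definition ptrace :: "nat \<Rightarrow> nat \<Rightarrow> nat set \<Rightarrow> cmat \<Rightarrow> cmat" where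
  "ptrace q W S \<rho> = (\<lambda>a b.
     if a < q ^ card S \<and> b < q ^ card S
     then (\<Sum>c<q ^ (W - card S). \<rho> (merge_idx q W S a c) (merge_idx q W S b c))
     else 0)"

text \<open>QSS encoding: secret of m qudits, shares j in {1..n}, share j consisting of
w j qudits; all W = sum of w j share qudits are laid out share after share.\<close>
definition total_qudits :: "nat \<Rightarrow> (nat \<Rightarrow> nat) \<Rightarrow> nat" where
  "total_qudits n w = (\<Sum>j\<in>{1..n}. w j)"

definition share_block :: "(nat \<Rightarrow> nat) \<Rightarrow> nat \<Rightarrow> nat set" where
  "share_block w j = {(\<Sum>i\<in>{1..<j}. w i) ..< (\<Sum>i\<in>{1..<j}. w i) + w j}"

definition qudits_of :: "(nat \<Rightarrow> nat) \<Rightarrow> nat set \<Rightarrow> nat set" where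
  "qudits_of w P = (\<Union>j\<in>P. share_block w j)"

definition recoverable ::
  "nat \<Rightarrow> nat \<Rightarrow> nat \<Rightarrow> (nat \<Rightarrow> nat) \<Rightarrow> cmat list \<Rightarrow> nat set \<Rightarrow> bool" where
  "recoverable q n m w Ks S \<longleftrightarrow>
     (\<exists>Rs. is_channel (q ^ card S) (q ^ m) Rs \<and>
        (\<forall>\<rho>. density (q ^ m) \<rho> \<longrightarrow>
           apply_channel (q ^ card S) (q ^ m) Rs
             (ptrace q (total_qudits n w) S
               (apply_channel (q ^ m) (q ^ total_qudits n w) Ks \<rho>)) = \<rho>))"

definition no_info ::
  "nat \<Rightarrow> nat \<Rightarrow> nat \<Rightarrow> (nat \<Rightarrow> nat) \<Rightarrow> cmat list \<Rightarrow> nat set \<Rightarrow> bool" where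
  "no_info q n m w Ks S \<longleftrightarrow>
     (\<forall>\<rho> \<sigma>. density (q ^ m) \<rho> \<longrightarrow> density (q ^ m) \<sigma> \<longrightarrow>
        ptrace q (total_qudits n w) S (apply_channel (q ^ m) (q ^ total_qudits n w) Ks \<rho>) =
        ptrace q (total_qudits n w) S (apply_channel (q ^ m) (q ^ total_qudits n w) Ks \<sigma>))"

definition authorized ::
  "nat \<Rightarrow> nat \<Rightarrow> nat \<Rightarrow> (nat \<Rightarrow> nat) \<Rightarrow> cmat list \<Rightarrow> nat set \<Rightarrow> bool" where
  "authorized q n m w Ks P \<longleftrightarrow> recoverable q n m w Ks (qudits_of w P)"

definition unauthorized ::
  "nat \<Rightarrow> nat \<Rightarrow> nat \<Rightarrow> (nat \<Rightarrow> nat) \<Rightarrow> cmat list \<Rightarrow> nat set \<Rightarrow> bool" where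
  "unauthorized q n m w Ks P \<longleftrightarrow> no_info q n m w Ks (qudits_of w P)"

definition qss_scheme ::
  "nat \<Rightarrow> nat \<Rightarrow> nat \<Rightarrow> nat \<Rightarrow> nat \<Rightarrow> (nat \<Rightarrow> nat) \<Rightarrow> cmat list \<Rightarrow> bool" where
  "qss_scheme t n z q m w Ks \<longleftrightarrow>
     is_channel (q ^ m) (q ^ total_qudits n w) Ks \<and>
     (\<forall>P \<subseteq> {1..n}. t \<le> card P \<longrightarrow> authorized q n m w Ks P) \<and>
     (\<forall>P \<subseteq> {1..n}. card P \<le> z \<longrightarrow> unauthorized q n m w Ks P)"

end

theory Submission
  imports Defs "HOL-Library.Function_Algebras"
begin

definition fsc :: "complex \<Rightarrow> ('a \<Rightarrow> complex) \<Rightarrow> ('a \<Rightarrow> complex)" where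
  "fsc c f = (\<lambda>x. c * f x)"

interpretation fvs: vector_space fsc
  by unfold_locales (auto simp: fsc_def fun_eq_iff algebra_simps)

lemma fsc_apply[simp]: "fsc c f x = c * f x" by (simp add: fsc_def)

lemma sum_fun_apply: "(\<Sum>i\<in>A. f i) x = (\<Sum>i\<in>A. f i x)"
  by (induction A rule: infinite_finite_induct) auto

lemma span_finite_iff:
  assumes "finite S"
  shows "v \<in> fvs.span S \<longleftrightarrow> (\<exists>u. v = (\<lambda>x. \<Sum>w\<in>S. u w * w x))"
  using fvs.span_finite[OF assms] by (auto simp: fun_eq_iff sum_fun_apply)

lemma indep_family:
  fixes v :: "'i \<Rightarrow> 'a \<Rightarrow> complex"
  assumes fin: "finite I"
    and h: "\<And>c. (\<And>x. (\<Sum>i\<in>I. c i * v i x) = 0) \<Longrightarrow> \<forall>i\<in>I. c i = 0"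
  shows "inj_on v I \<and> fvs.independent (v ` I)"
proof
  show inj: "inj_on v I"
  proof (rule inj_onI, rule ccontr)
    fix i j assume ij: "i \<in> I" "j \<in> I" "v i = v j" "i \<noteq> j"
    define c where "c k = (if k = i then 1 else if k = j then -1 else (0::complex))" for k
    have "\<forall>k\<in>I. c k = 0"
    proof (rule h)
      fix x
      have "(\<Sum>k\<in>I. c k * v k x) = (\<Sum>k\<in>{i,j}. c k * v k x)"
        using ij fin by (intro sum.mono_neutral_right) (auto simp: c_def)
      also have "\<dots> = 0" using ij by (simp add: c_def)
      finally show "(\<Sum>k\<in>I. c k * v k x) = 0" .
    qed
    then show False using ij by (auto simp: c_def)
  qed
  show "fvs.independent (v ` I)"
  proof (rule fvs.independent_if_scalars_zero)
    show "finite (v ` I)" using fin by simp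
    fix f w assume s: "(\<Sum>x\<in>v ` I. fsc (f x) x) = 0" and w: "w \<in> v ` I"
    have "\<forall>i\<in>I. f (v i) = 0"
    proof (rule h)
      fix x
      have "(\<Sum>i\<in>I. f (v i) * v i x) = (\<Sum>y\<in>v ` I. f y * y x)"
        using sum.reindex[OF inj, of "\<lambda>y. f y * y x"] by simp
      also have "\<dots> = (\<Sum>y\<in>v ` I. fsc (f y) y) x" by (simp add: sum_fun_apply)
      also have "\<dots> = 0" using s by simp
      finally show "(\<Sum>i\<in>I. f (v i) * v i x) = 0" .
    qed
    then show "f w = 0" using w by auto
  qed
qed

lemma indep_coeffs_zero:
  assumes "finite S" "fvs.independent S" "\<And>x. (\<Sum>w\<in>S. u w * w x) = 0" "w \<in> S"
  shows "u w = 0"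
proof -
  have "(\<Sum>w\<in>S. fsc (u w) w) = 0" using assms(3) by (auto simp: fun_eq_iff sum_fun_apply)
  then show ?thesis using fvs.dependent_finite[OF assms(1)] assms(2,4) by auto
qed

interpretation fvp: vector_space_pair "fsc :: complex \<Rightarrow> ('a\<Rightarrow>complex) \<Rightarrow> _" "fsc :: complex \<Rightarrow> ('b\<Rightarrow>complex) \<Rightarrow> _" ..

lemma inj_surj_span:
  fixes L :: "('a \<Rightarrow> complex) \<Rightarrow> ('a \<Rightarrow> complex)"
  assumes fin: "finite G"
    and lin: "Vector_Spaces.linear fsc fsc L"
    and into: "\<And>x. x \<in> fvs.span G \<Longrightarrow> L x \<in> fvs.span G"
    and ker: "\<And>x. x \<in> fvs.span G \<Longrightarrow> L x = 0 \<Longrightarrow> x = 0"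
    and xG: "x \<in> fvs.span G"
  shows "x \<in> L ` fvs.span G"
proof -
  obtain Bb where Bb: "Bb \<subseteq> G" "fvs.independent Bb" "G \<subseteq> fvs.span Bb"
    using fvs.maximal_independent_subset by blast
  have finB: "finite Bb" using Bb(1) fin finite_subset by blast
  have spB: "fvs.span Bb = fvs.span G"
    using Bb by (metis fvs.span_mono fvs.span_span subset_antisym)
  have injG: "inj_on L (fvs.span G)"
    using fvp.linear_inj_on_iff_eq_0[OF lin fvs.subspace_span] ker by blast
  have indL: "fvs.independent (L ` Bb)"
    using fvp.linear_independent_injective_image[OF lin Bb(2)] injG spB by simp
  have cardL: "card (L ` Bb) = card Bb"
    using card_image injG Bb(1) fvs.span_superset
    by (metis (no_types, lifting) inj_on_subset order_trans)
  have sub: "L ` Bb \<subseteq> fvs.span Bb"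
    using into Bb(1) fvs.span_superset spB by blast
  have "x \<in> fvs.span (L ` Bb)"
  proof (rule ccontr)
    assume nx: "x \<notin> fvs.span (L ` Bb)"
    have ind2: "fvs.independent (insert x (L ` Bb))"
      using fvs.independent_insertI[OF nx indL] .
    have "insert x (L ` Bb) \<subseteq> fvs.span Bb" using sub xG spB by auto
    then have "card (insert x (L ` Bb)) \<le> card Bb"
      using fvs.independent_span_bound[OF finB ind2] by simp
    moreover have "x \<notin> L ` Bb" using nx fvs.span_superset by blast
    ultimately show False using cardL finB by simp
  qed
  then show ?thesis using fvp.linear_span_image[OF lin] spB by auto
qed

lemma sum_list_nth: "(\<Sum>x\<leftarrow>xs. f x) = (\<Sum>k<length xs. f (xs ! k))"
  by (simp add: sum_list_sum_nth atLeast0LessThan)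

lemma apply_channel_nth:
  "apply_channel din dout Ks \<rho> a b =
    (if a < dout \<and> b < dout then (\<Sum>k<length Ks. \<Sum>i<din. \<Sum>j<din. (Ks!k) a i * \<rho> i j * cnj ((Ks!k) b j)) else 0)"
  by (simp add: apply_channel_def sum_list_nth)

lemma swap3: "(\<Sum>a\<in>A. \<Sum>b\<in>B. \<Sum>k\<in>K. G a b k) = (\<Sum>k\<in>K. \<Sum>a\<in>A. \<Sum>b\<in>B. G a b k)"
proof -
  have "(\<Sum>a\<in>A. \<Sum>b\<in>B. \<Sum>k\<in>K. G a b k) = (\<Sum>a\<in>A. \<Sum>k\<in>K. \<Sum>b\<in>B. G a b k)"
    by (rule sum.cong[OF refl], rule sum.swap)
  also have "\<dots> = (\<Sum>k\<in>K. \<Sum>a\<in>A. \<Sum>b\<in>B. G a b k)" by (rule sum.swap)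
  finally show ?thesis .
qed

lemma compose_expand:
  assumes "x < d" "y < d"
  shows "apply_channel dN d Rs (apply_channel d dN Bs \<rho>) x y =
    (\<Sum>r<length Rs. \<Sum>k<length Bs. \<Sum>i<d. \<Sum>j<d.
       (\<Sum>a<dN. (Rs!r) x a * (Bs!k) a i) * \<rho> i j * cnj (\<Sum>b<dN. (Rs!r) y b * (Bs!k) b j))" (is "_ = ?rhs")
proof -
  have "apply_channel dN d Rs (apply_channel d dN Bs \<rho>) x y =
     (\<Sum>r<length Rs. \<Sum>a<dN. \<Sum>b<dN. (Rs!r) x a *
        (\<Sum>k<length Bs. \<Sum>i<d. \<Sum>j<d. (Bs!k) a i * \<rho> i j * cnj ((Bs!k) b j)) * cnj ((Rs!r) y b))"
    using assms by (simp add: apply_channel_nth)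
  also have "\<dots> = (\<Sum>r<length Rs. \<Sum>a<dN. \<Sum>b<dN. \<Sum>k<length Bs. \<Sum>i<d. \<Sum>j<d.
        (Rs!r) x a * (Bs!k) a i * \<rho> i j * (cnj ((Rs!r) y b) * cnj ((Bs!k) b j)))"
    by (simp only: sum_distrib_left sum_distrib_right) (intro sum.cong refl, simp add: mult_ac)
  also have "\<dots> = (\<Sum>r<length Rs. \<Sum>k<length Bs. \<Sum>i<d. \<Sum>j<d. \<Sum>a<dN. \<Sum>b<dN.
        (Rs!r) x a * (Bs!k) a i * \<rho> i j * (cnj ((Rs!r) y b) * cnj ((Bs!k) b j)))"
    apply (rule sum.cong[OF refl])
    apply (subst swap3[where A="{..<dN}" and B="{..<dN}"])
    apply (rule sum.cong[OF refl])
    apply (subst swap3[where A="{..<dN}" and B="{..<dN}"])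
    apply (rule sum.cong[OF refl])
    apply (subst swap3[where A="{..<dN}" and B="{..<dN}"])
    by simp
  also have "\<dots> = ?rhs"
    by (simp only: cnj_sum complex_cnj_mult sum_distrib_left sum_distrib_right mult_ac)
  finally show ?thesis .
qed

lemma density_pure:
  fixes \<psi> :: "nat \<Rightarrow> complex" and c :: real
  assumes c: "c \<ge> 0" and tr: "(\<Sum>i<d. of_real c * \<psi> i * cnj (\<psi> i)) = 1"
  shows "density d (\<lambda>i j. if i < d \<and> j < d then of_real c * \<psi> i * cnj (\<psi> j) else 0)"
  unfolding density_def
proof (intro conjI allI impI)
  show "(\<Sum>i<d. if i < d \<and> i < d then of_real c * \<psi> i * cnj (\<psi> i) else 0) = 1"
    using tr by simp
  fix v :: "nat \<Rightarrow> complex"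
  define w where "w = (\<Sum>i<d. cnj (v i) * \<psi> i)"
  have eq: "(\<Sum>i<d. \<Sum>j<d. cnj (v i) * (if i < d \<and> j < d then of_real c * \<psi> i * cnj (\<psi> j) else 0) * v j)
      = of_real c * (w * cnj w)"
    unfolding w_def apply (simp add: sum_distrib_left sum_distrib_right mult_ac)
    by (rule sum.swap)
  have "w * cnj w = of_real ((norm w)^2)" by (rule complex_norm_square[symmetric])
  then have eq2: "of_real c * (w * cnj w) = of_real (c * (norm w)^2)" by simp
  show "Im (\<Sum>i<d. \<Sum>j<d. cnj (v i) * (if i < d \<and> j < d then of_real c * \<psi> i * cnj (\<psi> j) else 0) * v j) = 0"
    unfolding eq eq2 by simp
  show "0 \<le> Re (\<Sum>i<d. \<Sum>j<d. cnj (v i) * (if i < d \<and> j < d then of_real c * \<psi> i * cnj (\<psi> j) else 0) * v j)"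
    unfolding eq eq2 using c by simp
qed (auto)

definition ket :: "nat \<Rightarrow> nat \<Rightarrow> complex" where "ket p = (\<lambda>i. if i = p then 1 else 0)"

lemma density_ket: "p < d \<Longrightarrow> density d (\<lambda>i j. if i < d \<and> j < d then of_real 1 * ket p i * cnj (ket p j) else 0)"
proof (rule density_pure)
  assume "p < d"
  have "(\<Sum>i<d. complex_of_real 1 * ket p i * cnj (ket p i)) = (\<Sum>i\<in>{p}. complex_of_real 1 * ket p i * cnj (ket p i))"
    using \<open>p < d\<close> by (intro sum.mono_neutral_right) (auto simp: ket_def)
  then show "(\<Sum>i<d. complex_of_real 1 * ket p i * cnj (ket p i)) = 1" by (simp add: ket_def)
qed simp

lemma density_two:
  assumes "p < d" "p' < d" "p \<noteq> p'" "cnj \<alpha> * \<alpha> = 1"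
  shows "density d (\<lambda>i j. if i < d \<and> j < d then of_real (1/2) * (ket p i + \<alpha> * ket p' i) * cnj (ket p j + \<alpha> * ket p' j) else 0)"
proof (rule density_pure)
  have "(\<Sum>i<d. of_real (1/2) * (ket p i + \<alpha> * ket p' i) * cnj (ket p i + \<alpha> * ket p' i))
     = (\<Sum>i\<in>{p,p'}. of_real (1/2) * (ket p i + \<alpha> * ket p' i) * cnj (ket p i + \<alpha> * ket p' i))"
    using assms by (intro sum.mono_neutral_right) (auto simp: ket_def)
  also have "\<dots> = 1" using assms by (simp add: ket_def mult_ac)
  finally show "(\<Sum>i<d. of_real (1/2) * (ket p i + \<alpha> * ket p' i) * cnj (ket p i + \<alpha> * ket p' i)) = 1" .
qed simp

lemma sum_ket: "p < d \<Longrightarrow> (\<Sum>i<d. ket p i * G i) = G p"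
proof -
  have "(\<Sum>i<d. ket p i * G i) = (\<Sum>i<d. if i = p then G i else 0)"
    by (intro sum.cong) (auto simp: ket_def)
  then show "p < d \<Longrightarrow> ?thesis" by simp
qed

lemma cnj_ket[simp]: "cnj (ket p i) = ket p i" by (simp add: ket_def)

lemma quad_two:
  assumes "p < d" "p' < d"
  shows "(\<Sum>i<d. \<Sum>j<d. F i j * (if i < d \<and> j < d then of_real c * (ket p i + \<alpha> * ket p' i) * cnj (ket p j + \<alpha> * ket p' j) else 0))
     = of_real c * (F p p + cnj \<alpha> * F p p' + \<alpha> * F p' p + \<alpha> * cnj \<alpha> * F p' p')"
proof -
  have "(\<Sum>i<d. \<Sum>j<d. F i j * (if i < d \<and> j < d then of_real c * (ket p i + \<alpha> * ket p' i) * cnj (ket p j + \<alpha> * ket p' j) else 0))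
    = (\<Sum>i<d. \<Sum>j<d. of_real c * (ket p i * (ket p j * F i j) + cnj \<alpha> * (ket p i * (ket p' j * F i j))
          + \<alpha> * (ket p' i * (ket p j * F i j)) + \<alpha> * cnj \<alpha> * (ket p' i * (ket p' j * F i j))))"
    by (intro sum.cong refl) (auto simp: algebra_simps)
  also have "\<dots> = of_real c * (F p p + cnj \<alpha> * F p p' + \<alpha> * F p' p + \<alpha> * cnj \<alpha> * F p' p')"
    using assms by (simp add: sum.distrib sum_distrib_left[symmetric] sum_ket)
  finally show ?thesis .
qed

lemma quad_one:
  assumes "p < d"
  shows "(\<Sum>i<d. \<Sum>j<d. F i j * (if i < d \<and> j < d then of_real 1 * ket p i * cnj (ket p j) else 0)) = F p p"
proof -
  have "(\<Sum>i<d. \<Sum>j<d. F i j * (if i < d \<and> j < d then of_real 1 * ket p i * cnj (ket p j) else 0))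
    = (\<Sum>i<d. \<Sum>j<d. ket p i * (ket p j * F i j))"
    by (intro sum.cong refl) (auto simp: algebra_simps)
  also have "\<dots> = F p p" using assms by (simp add: sum_distrib_left[symmetric] sum_ket)
  finally show ?thesis .
qed

lemma sum_sq_zero:
  fixes z :: "'i \<Rightarrow> complex"
  assumes "finite I" "(\<Sum>i\<in>I. z i * cnj (z i)) = 0" "i \<in> I"
  shows "z i = 0"
proof -
  have "(\<Sum>i\<in>I. z i * cnj (z i)) = of_real (\<Sum>i\<in>I. (norm (z i))^2)"
    by (simp add: complex_norm_square[symmetric] del: of_real_power)
  then have "(\<Sum>i\<in>I. (norm (z i))^2) = 0" using assms(2) by (metis of_real_eq_0_iff)
  then have "(norm (z i))^2 = 0" using assms(1,3) sum_nonneg_eq_0_iff[of I "\<lambda>i. (norm (z i))^2"] by auto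
  then show ?thesis by simp
qed

locale keyctx =
  fixes d dN dZ dY :: nat and g :: "nat \<times> nat \<Rightarrow> nat" and Bs Rs :: "cmat list"
  assumes d1: "1 \<le> d"
    and gbij: "bij_betw g ({..<dZ} \<times> {..<dY}) {..<dN}"
    and Rch: "is_channel dN d Rs"
    and rec: "\<And>\<rho>. density d \<rho> \<Longrightarrow> apply_channel dN d Rs (apply_channel d dN Bs \<rho>) = \<rho>"
    and cst: "\<And>\<rho> \<rho>' a b. density d \<rho> \<Longrightarrow> density d \<rho>' \<Longrightarrow> a < dZ \<Longrightarrow> b < dZ \<Longrightarrow>
       (\<Sum>y<dY. apply_channel d dN Bs \<rho> (g (a,y)) (g (b,y))) = (\<Sum>y<dY. apply_channel d dN Bs \<rho>' (g (a,y)) (g (b,y)))"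
begin

definition MM where "MM r k i j = (\<Sum>a<dN. (Rs!r) i a * (Bs!k) a j)"

abbreviation nR where "nR \<equiv> length Rs"
abbreviation nB where "nB \<equiv> length Bs"

lemma rec_expand:
  assumes "density d \<rho>" "x < d" "y < d"
  shows "(\<Sum>r<nR. \<Sum>k<nB. \<Sum>i<d. \<Sum>j<d. (MM r k x i * cnj (MM r k y j)) * \<rho> i j) = \<rho> x y"
proof -
  have "\<rho> x y = apply_channel dN d Rs (apply_channel d dN Bs \<rho>) x y" using rec[OF assms(1)] by simp
  also have "\<dots> = (\<Sum>r<nR. \<Sum>k<nB. \<Sum>i<d. \<Sum>j<d. MM r k x i * \<rho> i j * cnj (MM r k y j))"
    unfolding compose_expand[OF assms(2,3)] MM_def ..
  finally show ?thesis by (simp add: mult_ac)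
qed

definition rho1 :: "nat \<Rightarrow> cmat" where
  "rho1 p = (\<lambda>i j. if i < d \<and> j < d then of_real 1 * ket p i * cnj (ket p j) else 0)"

definition rho2 :: "nat \<Rightarrow> nat \<Rightarrow> complex \<Rightarrow> cmat" where
  "rho2 p p' \<alpha> = (\<lambda>i j. if i < d \<and> j < d then of_real (1/2) * (ket p i + \<alpha> * ket p' i) * cnj (ket p j + \<alpha> * ket p' j) else 0)"

lemma rho1_density: "p < d \<Longrightarrow> density d (rho1 p)"
  unfolding rho1_def by (rule density_ket)

lemma rho2_density: "p < d \<Longrightarrow> p' < d \<Longrightarrow> p \<noteq> p' \<Longrightarrow> cnj \<alpha> * \<alpha> = 1 \<Longrightarrow> density d (rho2 p p' \<alpha>)"
  unfolding rho2_def by (rule density_two)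

lemma rec_rho1:
  assumes "p < d" "x < d" "y < d"
  shows "(\<Sum>r<nR. \<Sum>k<nB. MM r k x p * cnj (MM r k y p)) = rho1 p x y"
  using rec_expand[OF rho1_density[OF assms(1)] assms(2,3)] unfolding rho1_def
  by (simp only: quad_one[OF assms(1)])

lemma rec_rho2:
  assumes "p < d" "p' < d" "p \<noteq> p'" "cnj \<alpha> * \<alpha> = 1" "x < d" "y < d"
  shows "(\<Sum>r<nR. \<Sum>k<nB. of_real (1/2) * (MM r k x p * cnj (MM r k y p) + cnj \<alpha> * (MM r k x p * cnj (MM r k y p'))
      + \<alpha> * (MM r k x p' * cnj (MM r k y p)) + \<alpha> * cnj \<alpha> * (MM r k x p' * cnj (MM r k y p')))) = rho2 p p' \<alpha> x y"
  using rec_expand[OF rho2_density[OF assms(1-4)] assms(5,6)] unfolding rho2_def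
  by (simp only: quad_two[OF assms(1,2)])

lemma MM_offdiag:
  assumes "r < nR" "k < nB" "x < d" "p < d" "x \<noteq> p"
  shows "MM r k x p = 0"
proof -
  have "rho1 p x x = 0" using assms by (simp add: rho1_def ket_def)
  then have "(\<Sum>r<nR. \<Sum>k<nB. MM r k x p * cnj (MM r k x p)) = 0"
    using rec_rho1[OF assms(4,3,3)] by simp
  then have "(\<Sum>(r,k)\<in>{..<nR}\<times>{..<nB}. MM r k x p * cnj (MM r k x p)) = 0"
    by (simp only: sum.cartesian_product)
  then show ?thesis
    using sum_sq_zero[of "{..<nR}\<times>{..<nB}" "\<lambda>(r,k). MM r k x p" "(r,k)"] assms by (simp add: case_prod_unfold)
qed

lemma MM_diag:
  assumes "r < nR" "k < nB" "p < d"
  shows "MM r k p p = MM r k 0 0"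
proof (cases "p = 0")
  case False
  have d0: "0 < d" using d1 by simp
  have h1: "(\<Sum>r<nR. \<Sum>k<nB. MM r k p p * cnj (MM r k p p)) = 1"
    using rec_rho1[OF assms(3,3,3)] by (simp add: rho1_def ket_def assms)
  have h0: "(\<Sum>r<nR. \<Sum>k<nB. MM r k 0 0 * cnj (MM r k 0 0)) = 1"
    using rec_rho1[OF d0 d0 d0] by (simp add: rho1_def ket_def d0)
  have h2: "(\<Sum>r<nR. \<Sum>k<nB. of_real (1/2) * (MM r k p p * cnj (MM r k 0 0))) = 1/2"
  proof -
    have "(\<Sum>r<nR. \<Sum>k<nB. of_real (1/2) * (MM r k p p * cnj (MM r k 0 p) + cnj 1 * (MM r k p p * cnj (MM r k 0 0))
      + 1 * (MM r k p 0 * cnj (MM r k 0 p)) + 1 * cnj 1 * (MM r k p 0 * cnj (MM r k 0 0)))) = rho2 p 0 1 p 0"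
      using rec_rho2[OF assms(3) d0 False _ assms(3) d0, of 1] by simp
    moreover have "rho2 p 0 1 p 0 = 1/2" using assms False by (simp add: rho2_def ket_def)
    moreover have "\<And>r k. r < nR \<Longrightarrow> k < nB \<Longrightarrow> MM r k 0 p = 0 \<and> MM r k p 0 = 0"
      using MM_offdiag False assms d0 by auto
    ultimately show ?thesis by simp
  qed
  have h2': "(\<Sum>r<nR. \<Sum>k<nB. MM r k p p * cnj (MM r k 0 0)) = 1"
  proof -
    have "(\<Sum>r<nR. \<Sum>k<nB. of_real (1/2) * (MM r k p p * cnj (MM r k 0 0))) =
      of_real (1/2) * (\<Sum>r<nR. \<Sum>k<nB. MM r k p p * cnj (MM r k 0 0))"
      by (simp add: sum_distrib_left)
    then show ?thesis using h2 by simp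
  qed
  have h3: "(\<Sum>r<nR. \<Sum>k<nB. MM r k 0 0 * cnj (MM r k p p)) = 1"
    using arg_cong[OF h2', of cnj] by (simp add: mult.commute)
  have "(\<Sum>r<nR. \<Sum>k<nB. (MM r k p p - MM r k 0 0) * cnj (MM r k p p - MM r k 0 0)) =
     (\<Sum>r<nR. \<Sum>k<nB. MM r k p p * cnj (MM r k p p)) + (\<Sum>r<nR. \<Sum>k<nB. MM r k 0 0 * cnj (MM r k 0 0))
     - (\<Sum>r<nR. \<Sum>k<nB. MM r k p p * cnj (MM r k 0 0)) - (\<Sum>r<nR. \<Sum>k<nB. MM r k 0 0 * cnj (MM r k p p))"
    by (simp add: algebra_simps sum.distrib sum_subtractf)
  also have "\<dots> = 0" using h0 h1 h2' h3 by simp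
  finally have "(\<Sum>(r,k)\<in>{..<nR}\<times>{..<nB}. (MM r k p p - MM r k 0 0) * cnj (MM r k p p - MM r k 0 0)) = 0"
    by (simp only: sum.cartesian_product)
  then show ?thesis
    using sum_sq_zero[of "{..<nR}\<times>{..<nB}" "\<lambda>(r,k). MM r k p p - MM r k 0 0" "(r,k)"] assms
    by (simp add: case_prod_unfold)
qed simp

lemma MM_scalar:
  assumes "r < nR" "k < nB" "i < d" "j < d"
  shows "MM r k i j = (if i = j then MM r k 0 0 else 0)"
proof (cases "i = j")
  case True
  then show ?thesis using MM_diag[OF assms(1,2,3)] by simp
next
  case False
  then show ?thesis using MM_offdiag[OF assms(1,2,3,4)] by simp
qed

end

context keyctx begin

definition lam where "lam r k = MM r k 0 0"

lemma Rch': "a < dN \<Longrightarrow> b < dN \<Longrightarrow> (\<Sum>r<nR. \<Sum>x<d. cnj ((Rs!r) x a) * (Rs!r) x b) = (if a = b then 1 else 0)"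
  using Rch unfolding is_channel_def sum_list_nth by auto

lemma KL:
  assumes "k < nB" "k' < nB" "i < d" "j < d"
  shows "(\<Sum>a<dN. cnj ((Bs!k) a i) * (Bs!k') a j) = (if i = j then (\<Sum>r<nR. cnj (lam r k) * lam r k') else 0)"
proof -
  have "(\<Sum>a<dN. cnj ((Bs!k) a i) * (Bs!k') a j) = (\<Sum>a<dN. \<Sum>b<dN. cnj ((Bs!k) a i) * (if a = b then 1 else 0) * (Bs!k') b j)"
  proof (intro sum.cong refl)
    fix a assume "a \<in> {..<dN}"
    have "(\<Sum>b<dN. cnj ((Bs!k) a i) * (if a = b then 1 else 0) * (Bs!k') b j)
       = (\<Sum>b<dN. if a = b then cnj ((Bs!k) a i) * (Bs!k') b j else 0)"
      by (intro sum.cong refl) simp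
    then show "cnj ((Bs!k) a i) * (Bs!k') a j = (\<Sum>b<dN. cnj ((Bs!k) a i) * (if a = b then 1 else 0) * (Bs!k') b j)"
      using \<open>a \<in> {..<dN}\<close> by simp
  qed
  also have "\<dots> = (\<Sum>a<dN. \<Sum>b<dN. \<Sum>r<nR. \<Sum>x<d. cnj ((Bs!k) a i) * (cnj ((Rs!r) x a) * (Rs!r) x b) * (Bs!k') b j)"
    by (intro sum.cong refl) (simp add: Rch'[symmetric] sum_distrib_left sum_distrib_right)
  also have "\<dots> = (\<Sum>r<nR. \<Sum>x<d. \<Sum>a<dN. \<Sum>b<dN. cnj ((Bs!k) a i) * (cnj ((Rs!r) x a) * (Rs!r) x b) * (Bs!k') b j)"
    apply (subst swap3[where A="{..<dN}" and B="{..<dN}"])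
    apply (rule sum.cong[OF refl])
    apply (subst swap3[where A="{..<dN}" and B="{..<dN}"])
    by simp
  also have "\<dots> = (\<Sum>r<nR. \<Sum>x<d. cnj (MM r k x i) * MM r k' x j)"
    unfolding MM_def
    apply (simp only: cnj_sum complex_cnj_mult sum_distrib_left sum_distrib_right)
    apply (rule sum.cong[OF refl], rule sum.cong[OF refl])
    apply (subst sum.swap)
    by (intro sum.cong refl) (simp add: mult_ac)
  also have "\<dots> = (\<Sum>r<nR. \<Sum>x<d. cnj (if x = i then lam r k else 0) * (if x = j then lam r k' else 0))"
  proof (intro sum.cong refl)
    fix r x assume "r \<in> {..<nR}" "x \<in> {..<d}"
    then show "cnj (MM r k x i) * MM r k' x j = cnj (if x = i then lam r k else 0) * (if x = j then lam r k' else 0)"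
      using MM_scalar[of r k x i] MM_scalar[of r k' x j] assms unfolding lam_def by simp
  qed
  also have "\<dots> = (if i = j then (\<Sum>r<nR. cnj (lam r k) * lam r k') else 0)"
  proof (cases "i = j")
    case True
    have "(\<Sum>r<nR. \<Sum>x<d. cnj (if x = i then lam r k else 0) * (if x = j then lam r k' else 0))
       = (\<Sum>r<nR. \<Sum>x<d. if x = i then cnj (lam r k) * lam r k' else 0)"
      using True by (intro sum.cong refl) simp
    then show ?thesis using True assms by simp
  next
    case False
    have "(\<Sum>r<nR. \<Sum>x<d. cnj (if x = i then lam r k else 0) * (if x = j then lam r k' else 0))
       = (\<Sum>r<nR. \<Sum>x<d. 0)"
      using False by (intro sum.cong refl) simp
    then show ?thesis using False by simp
  qed
  finally show ?thesis .
qed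

end

lemma in_span_sum:
  assumes "finite I" "\<And>i. i \<in> I \<Longrightarrow> v i \<in> S"
  shows "(\<lambda>x. \<Sum>i\<in>I. c i * v i x) \<in> fvs.span S"
proof -
  have "(\<lambda>x. \<Sum>i\<in>I. c i * v i x) = (\<Sum>i\<in>I. fsc (c i) (v i))"
    by (simp add: fun_eq_iff sum_fun_apply)
  also have "\<dots> \<in> fvs.span S"
    using assms by (intro fvs.span_sum fvs.span_scale fvs.span_base) auto
  finally show ?thesis .
qed

context keyctx begin

definition opv :: "nat \<Rightarrow> nat \<times> nat \<Rightarrow> complex" where
  "opv k = (\<lambda>(a,i). if a < dN \<and> i < d then (Bs!k) a i else 0)"

definition OB where "OB = opv ` {..<nB}"

definition ip :: "(nat \<times> nat \<Rightarrow> complex) \<Rightarrow> (nat \<times> nat \<Rightarrow> complex) \<Rightarrow> nat \<Rightarrow> nat \<Rightarrow> complex" where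
  "ip X Y i j = (\<Sum>a<dN. cnj (X (a,i)) * Y (a,j))"

lemma finite_OB: "finite OB" unfolding OB_def by simp

lemma ip_gen:
  assumes "w \<in> OB" "w' \<in> OB" "i < d" "j < d"
  shows "ip w w' i j = (if i = j then ip w w' 0 0 else 0)"
proof -
  obtain k k' where k: "k < nB" "k' < nB" "w = opv k" "w' = opv k'" using assms OB_def by auto
  have d0: "0 < d" using d1 by simp
  have "ip w w' i j = (\<Sum>a<dN. cnj ((Bs!k) a i) * (Bs!k') a j)"
    using assms k unfolding ip_def opv_def by (intro sum.cong) auto
  moreover have "ip w w' 0 0 = (\<Sum>a<dN. cnj ((Bs!k) a 0) * (Bs!k') a 0)"
    using d0 k unfolding ip_def opv_def by (intro sum.cong) auto
  ultimately show ?thesis using KL[OF k(1,2) assms(3,4)] KL[OF k(1,2) d0 d0] by simp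
qed

lemma ip_expand:
  assumes "finite G"
  shows "ip (\<lambda>x. \<Sum>w\<in>G. u w * w x) (\<lambda>x. \<Sum>w\<in>G. u' w * w x) i j
     = (\<Sum>w\<in>G. \<Sum>w'\<in>G. cnj (u w) * u' w' * ip w w' i j)"
proof -
  have "ip (\<lambda>x. \<Sum>w\<in>G. u w * w x) (\<lambda>x. \<Sum>w\<in>G. u' w * w x) i j
     = (\<Sum>a<dN. \<Sum>w\<in>G. \<Sum>w'\<in>G. cnj (u w) * u' w' * (cnj (w (a,i)) * w' (a,j)))"
    unfolding ip_def
    apply (simp only: cnj_sum complex_cnj_mult sum_distrib_left sum_distrib_right)
    apply (rule sum.cong[OF refl])
    apply (subst sum.swap)
    by (intro sum.cong refl) (simp add: mult_ac)
  also have "\<dots> = (\<Sum>w\<in>G. \<Sum>a<dN. \<Sum>w'\<in>G. cnj (u w) * u' w' * (cnj (w (a,i)) * w' (a,j)))"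
    by (rule sum.swap)
  also have "\<dots> = (\<Sum>w\<in>G. \<Sum>w'\<in>G. \<Sum>a<dN. cnj (u w) * u' w' * (cnj (w (a,i)) * w' (a,j)))"
    by (intro sum.cong refl sum.swap)
  also have "\<dots> = (\<Sum>w\<in>G. \<Sum>w'\<in>G. cnj (u w) * u' w' * ip w w' i j)"
    unfolding ip_def by (simp add: sum_distrib_left)
  finally show ?thesis .
qed

lemma ip_span:
  assumes "X \<in> fvs.span OB" "Y \<in> fvs.span OB" "i < d" "j < d"
  shows "ip X Y i j = (if i = j then ip X Y 0 0 else 0)"
proof -
  obtain u where u1: "X = (\<lambda>x. \<Sum>w\<in>OB. u w * w x)"
    using assms(1) unfolding span_finite_iff[OF finite_OB] by blast
  obtain u' where u2: "Y = (\<lambda>x. \<Sum>w\<in>OB. u' w * w x)"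
    using assms(2) unfolding span_finite_iff[OF finite_OB] by blast
  note u = u1 u2
  have d0: "0 < d" using d1 by simp
  have "ip X Y i j = (\<Sum>w\<in>OB. \<Sum>w'\<in>OB. cnj (u w) * u' w' * ip w w' i j)"
    unfolding u by (rule ip_expand[OF finite_OB])
  also have "\<dots> = (\<Sum>w\<in>OB. \<Sum>w'\<in>OB. cnj (u w) * u' w' * (if i = j then ip w w' 0 0 else 0))"
  proof (intro sum.cong refl)
    fix w w' assume "w \<in> OB" "w' \<in> OB"
    then show "cnj (u w) * u' w' * ip w w' i j = cnj (u w) * u' w' * (if i = j then ip w w' 0 0 else 0)"
      using ip_gen[of w w' i j] assms by simp
  qed
  also have "\<dots> = (if i = j then ip X Y 0 0 else 0)"
    unfolding u ip_expand[OF finite_OB] by (cases "i = j") auto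
  finally show ?thesis .
qed

lemma OB_vanish: "w \<in> fvs.span OB \<Longrightarrow> \<not> (a < dN \<and> i < d) \<Longrightarrow> w (a,i) = 0"
proof -
  assume w: "w \<in> fvs.span OB" and ai: "\<not> (a < dN \<and> i < d)"
  obtain u where "w = (\<lambda>x. \<Sum>v\<in>OB. u v * v x)" using w unfolding span_finite_iff[OF finite_OB] by blast
  moreover have "\<And>v. v \<in> OB \<Longrightarrow> v (a,i) = 0" using ai unfolding OB_def opv_def by auto
  ultimately show ?thesis by (auto intro!: sum.neutral)
qed

lemma ip_self_zero:
  assumes "X \<in> fvs.span OB" "\<And>i. i < d \<Longrightarrow> ip X X i i = 0"
  shows "X = 0"
proof
  fix x :: "nat \<times> nat"
  obtain a i where x: "x = (a,i)" by fastforce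
  show "X x = 0 x"
  proof (cases "a < dN \<and> i < d")
    case True
    have "(\<Sum>a<dN. X (a,i) * cnj (X (a,i))) = 0"
      using assms(2)[of i] True unfolding ip_def by (simp add: mult.commute)
    then have "X (a,i) = 0" using sum_sq_zero[of "{..<dN}" "\<lambda>a. X (a,i)" a] True by simp
    then show ?thesis using x by simp
  next
    case False
    then show ?thesis using OB_vanish[OF assms(1)] x by simp
  qed
qed

end

context keyctx begin

definition bset where "bset = (SOME B. B \<subseteq> OB \<and> fvs.independent B \<and> OB \<subseteq> fvs.span B)"

lemma bset_props: "bset \<subseteq> OB" "fvs.independent bset" "OB \<subseteq> fvs.span bset" "finite bset"
proof -
  obtain B0 where "B0 \<subseteq> OB" "fvs.independent B0" "OB \<subseteq> fvs.span B0"
    by (rule fvs.maximal_independent_subset)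
  then have ex: "\<exists>B. B \<subseteq> OB \<and> fvs.independent B \<and> OB \<subseteq> fvs.span B" by blast
  have "bset \<subseteq> OB \<and> fvs.independent bset \<and> OB \<subseteq> fvs.span bset"
    unfolding bset_def by (rule someI_ex[OF ex])
  then show "bset \<subseteq> OB" "fvs.independent bset" "OB \<subseteq> fvs.span bset" by auto
  then show "finite bset" using finite_OB finite_subset by blast
qed

lemma col_indep:
  "inj_on (\<lambda>(b,i). \<lambda>a. b (a,i)) (bset \<times> {..<d}) \<and> fvs.independent ((\<lambda>(b,i). \<lambda>a. b (a,i)) ` (bset \<times> {..<d}))"
proof (rule indep_family)
  show "finite (bset \<times> {..<d})" using bset_props(4) by simp
  fix c :: "(nat \<times> nat \<Rightarrow> complex) \<times> nat \<Rightarrow> complex"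
  assume h: "\<And>x. (\<Sum>i\<in>bset \<times> {..<d}. c i * (case i of (b, i) \<Rightarrow> \<lambda>a. b (a, i)) x) = 0"
  define X where "X i = (\<lambda>x. \<Sum>b\<in>bset. c (b,i) * b x)" for i
  have Xs: "X i \<in> fvs.span OB" for i
    unfolding X_def using bset_props(1) by (intro in_span_sum bset_props(4)) auto
  have h2: "(\<Sum>i<d. X i (a,i)) = 0" for a
  proof -
    have "(\<Sum>i<d. X i (a,i)) = (\<Sum>i<d. \<Sum>b\<in>bset. c (b,i) * b (a,i))" unfolding X_def by simp
    also have "\<dots> = (\<Sum>b\<in>bset. \<Sum>i<d. c (b,i) * b (a,i))" by (rule sum.swap)
    also have "\<dots> = (\<Sum>p\<in>bset \<times> {..<d}. c p * (case p of (b, i) \<Rightarrow> \<lambda>a. b (a, i)) a)"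
      by (simp only: sum.cartesian_product) (rule sum.cong, auto)
    also have "\<dots> = 0" by (rule h)
    finally show ?thesis .
  qed
  have X0: "X j = 0" if j: "j < d" for j
  proof (rule ip_self_zero[OF Xs])
    have "0 = (\<Sum>a<dN. cnj (X j (a,j)) * (\<Sum>i<d. X i (a,i)))" using h2 by simp
    also have "\<dots> = (\<Sum>i<d. ip (X j) (X i) j i)"
      unfolding ip_def by (simp add: sum_distrib_left) (rule sum.swap)
    also have "\<dots> = (\<Sum>i<d. if j = i then ip (X j) (X i) j i else 0)"
    proof (intro sum.cong refl)
      fix i assume "i \<in> {..<d}"
      then show "ip (X j) (X i) j i = (if j = i then ip (X j) (X i) j i else 0)"
        using ip_span[OF Xs Xs j, of i] by (cases "j = i") simp_all
    qed
    also have "\<dots> = ip (X j) (X j) j j" using j by simp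
    finally have z: "ip (X j) (X j) j j = 0" by simp
    fix i assume i: "i < d"
    have "ip (X j) (X j) i i = ip (X j) (X j) 0 0" using ip_span[OF Xs Xs i i] by simp
    also have "\<dots> = ip (X j) (X j) j j" using ip_span[OF Xs Xs j j] by simp
    finally show "ip (X j) (X j) i i = 0" using z by simp
  qed
  show "\<forall>p\<in>bset \<times> {..<d}. c p = 0"
  proof
    fix p assume p: "p \<in> bset \<times> {..<d}"
    obtain b j where bj: "p = (b,j)" "b \<in> bset" "j < d" using p by auto
    have "\<And>x. (\<Sum>b\<in>bset. c (b,j) * b x) = 0"
    proof -
      fix x show "(\<Sum>b\<in>bset. c (b,j) * b x) = 0" using fun_cong[OF X0[OF bj(3)], of x] unfolding X_def by simp
    qed
    then have "c (b,j) = 0"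
      using indep_coeffs_zero[OF bset_props(4,2), of "\<lambda>b. c (b,j)"] bj by blast
    then show "c p = 0" using bj by simp
  qed
qed

lemma card_col: "card ((\<lambda>(b,i). \<lambda>a. b (a,i)) ` (bset \<times> {..<d})) = card bset * d"
proof -
  have "inj_on (\<lambda>(b,i). \<lambda>a. b (a,i)) (bset \<times> {..<d})" using col_indep by blast
  then show ?thesis by (simp add: card_image card_cartesian_product)
qed

end

context keyctx begin

definition sl where "sl k y i = (\<lambda>z::nat. if z < dZ then (Bs!k) (g (z,y)) i else 0)"
definition SL where "SL = (\<lambda>(k,y,i). sl k y i) ` ({..<nB} \<times> {..<dY} \<times> {..<d})"
definition Fset where "Fset = (SOME B. B \<subseteq> SL \<and> fvs.independent B \<and> SL \<subseteq> fvs.span B)"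

lemma finite_SL: "finite SL" unfolding SL_def by simp

lemma Fset_props: "Fset \<subseteq> SL" "fvs.independent Fset" "SL \<subseteq> fvs.span Fset" "finite Fset"
proof -
  obtain B0 where "B0 \<subseteq> SL" "fvs.independent B0" "SL \<subseteq> fvs.span B0"
    by (rule fvs.maximal_independent_subset)
  then have ex: "\<exists>B. B \<subseteq> SL \<and> fvs.independent B \<and> SL \<subseteq> fvs.span B" by blast
  have "Fset \<subseteq> SL \<and> fvs.independent Fset \<and> SL \<subseteq> fvs.span Fset"
    unfolding Fset_def by (rule someI_ex[OF ex])
  then show "Fset \<subseteq> SL" "fvs.independent Fset" "SL \<subseteq> fvs.span Fset" by auto
  then show "finite Fset" using finite_SL finite_subset by blast
qed

definition ginv where "ginv = the_inv_into ({..<dZ} \<times> {..<dY}) g"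

lemma g_in: "z < dZ \<Longrightarrow> y < dY \<Longrightarrow> g (z,y) < dN"
  using gbij unfolding bij_betw_def by auto

lemma ginv_props:
  assumes "a < dN"
  shows "fst (ginv a) < dZ" "snd (ginv a) < dY" "g (fst (ginv a), snd (ginv a)) = a"
proof -
  have "ginv a \<in> {..<dZ} \<times> {..<dY}"
    unfolding ginv_def using gbij assms
    by (metis bij_betw_def lessThan_iff the_inv_into_into subset_refl)
  then show "fst (ginv a) < dZ" "snd (ginv a) < dY" by auto
  have "g (ginv a) = a" unfolding ginv_def using gbij assms
    by (metis bij_betw_def lessThan_iff f_the_inv_into_f)
  then show "g (fst (ginv a), snd (ginv a)) = a" by simp
qed

definition ext :: "(nat \<Rightarrow> complex) \<Rightarrow> nat \<Rightarrow> nat \<Rightarrow> complex" where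
  "ext f y = (\<lambda>a. if a < dN then (if snd (ginv a) = y then f (fst (ginv a)) else 0) else 0)"

definition E1 where "E1 = (\<lambda>(f,y). ext f y) ` (Fset \<times> {..<dY})"

lemma finite_E1: "finite E1" unfolding E1_def using Fset_props(4) by simp

lemma card_E1: "card E1 \<le> card Fset * dY"
  unfolding E1_def using card_image_le[of "Fset \<times> {..<dY}" "\<lambda>(f,y). ext f y"] Fset_props(4)
  by (simp add: card_cartesian_product)

lemma ext_span: "y < dY \<Longrightarrow> f \<in> fvs.span Fset \<Longrightarrow> ext f y \<in> fvs.span E1"
proof -
  assume y: "y < dY" and f: "f \<in> fvs.span Fset"
  obtain u where u: "f = (\<lambda>z. \<Sum>w\<in>Fset. u w * w z)"
    using f unfolding span_finite_iff[OF Fset_props(4)] by blast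
  have "ext f y = (\<lambda>a. \<Sum>w\<in>Fset. u w * ext w y a)"
    unfolding u ext_def by (auto simp: fun_eq_iff)
  also have "\<dots> \<in> fvs.span E1"
    using y by (intro in_span_sum Fset_props(4)) (auto simp: E1_def)
  finally show ?thesis .
qed

lemma col_in_span:
  assumes b: "b \<in> bset" and i: "i < d"
  shows "(\<lambda>a. b (a,i)) \<in> fvs.span E1"
proof -
  obtain k where k: "k < nB" "b = opv k" using b bset_props(1) OB_def by auto
  have sl_in: "sl k y i \<in> fvs.span Fset" if "y < dY" for y
  proof -
    have "sl k y i \<in> SL" unfolding SL_def using k(1) i that by (intro image_eqI[of _ _ "(k,y,i)"]) auto
    then show ?thesis using Fset_props(3) by blast
  qed
  have "(\<lambda>a. b (a,i)) = (\<lambda>a. \<Sum>y<dY. 1 * ext (sl k y i) y a)"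
  proof
    fix a
    show "b (a,i) = (\<Sum>y<dY. 1 * ext (sl k y i) y a)"
    proof (cases "a < dN")
      case True
      note gi = ginv_props[OF True]
      have "(\<Sum>y<dY. 1 * ext (sl k y i) y a) = (\<Sum>y<dY. if snd (ginv a) = y then sl k y i (fst (ginv a)) else 0)"
        using True by (intro sum.cong refl) (simp add: ext_def)
      also have "\<dots> = sl k (snd (ginv a)) i (fst (ginv a))" using gi by simp
      also have "\<dots> = (Bs!k) a i" using gi by (simp add: sl_def)
      finally show ?thesis using k True i by (simp add: opv_def)
    next
      case False
      then show ?thesis using k by (simp add: opv_def ext_def)
    qed
  qed
  also have "\<dots> \<in> fvs.span (fvs.span E1)"
    by (intro in_span_sum ext_span sl_in) auto
  finally show ?thesis by (simp add: fvs.span_span)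
qed

lemma upper: "card bset * d \<le> card Fset * dY"
proof -
  have "(\<lambda>(b,i). \<lambda>a. b (a,i)) ` (bset \<times> {..<d}) \<subseteq> fvs.span E1"
    using col_in_span by auto
  then have "card ((\<lambda>(b,i). \<lambda>a. b (a,i)) ` (bset \<times> {..<d})) \<le> card E1"
    using fvs.independent_span_bound[OF finite_E1] col_indep by blast
  then show ?thesis using card_col card_E1 by simp
qed

end

context keyctx begin

definition Gm where "Gm i j a b = (\<Sum>y<dY. \<Sum>k<nB. (Bs!k) (g (a,y)) i * cnj ((Bs!k) (g (b,y)) j))"

lemma zstate_expand:
  assumes "a < dZ" "b < dZ"
  shows "(\<Sum>y<dY. apply_channel d dN Bs \<rho> (g (a,y)) (g (b,y))) = (\<Sum>i<d. \<Sum>j<d. Gm i j a b * \<rho> i j)"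
proof -
  have "(\<Sum>y<dY. apply_channel d dN Bs \<rho> (g (a,y)) (g (b,y))) =
     (\<Sum>y<dY. \<Sum>k<nB. \<Sum>i<d. \<Sum>j<d. (Bs!k) (g (a,y)) i * \<rho> i j * cnj ((Bs!k) (g (b,y)) j))"
    using assms g_in by (intro sum.cong refl) (simp add: apply_channel_nth)
  also have "\<dots> = (\<Sum>i<d. \<Sum>j<d. \<Sum>y<dY. \<Sum>k<nB. (Bs!k) (g (a,y)) i * \<rho> i j * cnj ((Bs!k) (g (b,y)) j))"
    apply (subst swap3[where A="{..<dY}" and B="{..<nB}"])
    apply (rule sum.cong[OF refl])
    apply (subst swap3[where A="{..<dY}" and B="{..<nB}"])
    by simp
  also have "\<dots> = (\<Sum>i<d. \<Sum>j<d. Gm i j a b * \<rho> i j)"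
    unfolding Gm_def by (simp add: sum_distrib_left mult_ac)
  finally show ?thesis .
qed

lemma zstate_eq:
  assumes "density d \<rho>" "density d \<rho>'" "a < dZ" "b < dZ"
  shows "(\<Sum>i<d. \<Sum>j<d. Gm i j a b * \<rho> i j) = (\<Sum>i<d. \<Sum>j<d. Gm i j a b * \<rho>' i j)"
  using cst[OF assms] zstate_expand[OF assms(3,4)] by simp

lemma Gm_diag:
  assumes "p < d" "a < dZ" "b < dZ"
  shows "Gm p p a b = Gm 0 0 a b"
proof -
  have d0: "0 < d" using d1 by simp
  have "Gm p p a b = (\<Sum>i<d. \<Sum>j<d. Gm i j a b * rho1 p i j)"
    unfolding rho1_def by (rule quad_one[OF assms(1), symmetric])
  also have "\<dots> = (\<Sum>i<d. \<Sum>j<d. Gm i j a b * rho1 0 i j)"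
    by (rule zstate_eq[OF rho1_density[OF assms(1)] rho1_density[OF d0] assms(2,3)])
  also have "\<dots> = Gm 0 0 a b"
    unfolding rho1_def by (rule quad_one[OF d0])
  finally show ?thesis .
qed

lemma Gm_off:
  assumes "p < d" "p' < d" "p \<noteq> p'" "a < dZ" "b < dZ"
  shows "Gm p p' a b = 0"
proof -
  have d0: "0 < d" using d1 by simp
  have two: "of_real (1/2) * (Gm p p a b + cnj \<alpha> * Gm p p' a b + \<alpha> * Gm p' p a b + \<alpha> * cnj \<alpha> * Gm p' p' a b) = Gm 0 0 a b"
    if al: "cnj \<alpha> * \<alpha> = 1" for \<alpha>
  proof -
    have "of_real (1/2) * (Gm p p a b + cnj \<alpha> * Gm p p' a b + \<alpha> * Gm p' p a b + \<alpha> * cnj \<alpha> * Gm p' p' a b)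
       = (\<Sum>i<d. \<Sum>j<d. Gm i j a b * rho2 p p' \<alpha> i j)"
      unfolding rho2_def by (rule quad_two[OF assms(1,2), symmetric])
    also have "\<dots> = (\<Sum>i<d. \<Sum>j<d. Gm i j a b * rho1 0 i j)"
      by (rule zstate_eq[OF rho2_density[OF assms(1-3) al] rho1_density[OF d0] assms(4,5)])
    also have "\<dots> = Gm 0 0 a b"
      unfolding rho1_def by (rule quad_one[OF d0])
    finally show ?thesis .
  qed
  have pp: "Gm p p a b = Gm 0 0 a b" "Gm p' p' a b = Gm 0 0 a b"
    using Gm_diag[OF assms(1,4,5)] Gm_diag[OF assms(2,4,5)] by auto
  have e1': "Gm p p' a b / 2 + Gm p' p a b / 2 = 0" using two[of 1] pp by (simp add: algebra_simps)
  have e1: "Gm p p' a b + Gm p' p a b = 0" using arg_cong[OF e1', of "\<lambda>x. 2 * x"] by (simp add: algebra_simps)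
  have e2: "- \<i> * Gm p p' a b + \<i> * Gm p' p a b = 0" using two[of "\<i>"] pp by (simp add: algebra_simps)
  have "\<i> * (Gm p' p a b - Gm p p' a b) = 0" using e2 by (simp add: algebra_simps)
  then have "Gm p' p a b = Gm p p' a b" by simp
  with e1 show ?thesis by simp
qed

lemma Gm_delta:
  assumes "i < d" "j < d" "a < dZ" "b < dZ"
  shows "Gm i j a b = (if i = j then Gm 0 0 a b else 0)"
proof (cases "i = j")
  case True
  then show ?thesis using Gm_diag[OF assms(1,3,4)] by simp
next
  case False
  then show ?thesis using Gm_off[OF assms(1,2) False assms(3,4)] by simp
qed

end

context keyctx begin

abbreviation PP where "PP \<equiv> {..<nB} \<times> {..<dY}"

definition G0 where "G0 i0 = (\<lambda>p. sl (fst p) (snd p) i0) ` PP"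

definition Ls where "Ls i0 h = (\<lambda>z. if z < dZ then (\<Sum>z'<dZ. Gm i0 i0 z z' * h z') else 0)"

lemma sl_out: "\<not> z < dZ \<Longrightarrow> sl k y i z = 0" by (simp add: sl_def)

lemma Ls_repr:
  "Ls i0 h = (\<lambda>z. \<Sum>p\<in>PP. (\<Sum>z'<dZ. cnj (sl (fst p) (snd p) i0 z') * h z') * sl (fst p) (snd p) i0 z)"
proof
  fix z
  show "Ls i0 h z = (\<Sum>p\<in>PP. (\<Sum>z'<dZ. cnj (sl (fst p) (snd p) i0 z') * h z') * sl (fst p) (snd p) i0 z)"
  proof (cases "z < dZ")
    case True
    have "(\<Sum>p\<in>PP. (\<Sum>z'<dZ. cnj (sl (fst p) (snd p) i0 z') * h z') * sl (fst p) (snd p) i0 z)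
       = (\<Sum>k<nB. \<Sum>y<dY. (\<Sum>z'<dZ. cnj (sl k y i0 z') * h z') * sl k y i0 z)"
      by (simp add: sum.cartesian_product case_prod_unfold)
    also have "\<dots> = (\<Sum>y<dY. \<Sum>k<nB. (\<Sum>z'<dZ. cnj (sl k y i0 z') * h z') * sl k y i0 z)"
      by (rule sum.swap)
    also have "\<dots> = (\<Sum>y<dY. \<Sum>k<nB. \<Sum>z'<dZ. (Bs!k) (g (z,y)) i0 * cnj ((Bs!k) (g (z',y)) i0) * h z')"
      using True by (intro sum.cong refl) (simp add: sl_def sum_distrib_right sum_distrib_left mult_ac)
    also have "\<dots> = (\<Sum>z'<dZ. \<Sum>y<dY. \<Sum>k<nB. (Bs!k) (g (z,y)) i0 * cnj ((Bs!k) (g (z',y)) i0) * h z')"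
      by (rule swap3)
    also have "\<dots> = Ls i0 h z"
      using True by (simp add: Ls_def Gm_def sum_distrib_right)
    finally show ?thesis by simp
  next
    case False
    then show ?thesis by (simp add: Ls_def sl_out)
  qed
qed

lemma finite_G0: "finite (G0 i0)" unfolding G0_def by simp

lemma Ls_in: "Ls i0 h \<in> fvs.span (G0 i0)"
  unfolding Ls_repr by (intro in_span_sum) (auto simp: G0_def)

lemma Ls_lin: "Vector_Spaces.linear fsc fsc (Ls i0)"
  unfolding Vector_Spaces.linear_iff
proof (intro conjI allI)
  show "vector_space (fsc :: complex \<Rightarrow> (nat \<Rightarrow> complex) \<Rightarrow> _)" by (rule fvs.vector_space_axioms)
  show "vector_space (fsc :: complex \<Rightarrow> (nat \<Rightarrow> complex) \<Rightarrow> _)" by (rule fvs.vector_space_axioms)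
  fix x y :: "nat \<Rightarrow> complex" and c :: complex
  show "Ls i0 (x + y) = Ls i0 x + Ls i0 y"
    by (simp add: Ls_def fun_eq_iff algebra_simps sum.distrib)
  show "Ls i0 (fsc c x) = fsc c (Ls i0 x)"
    by (simp add: Ls_def fun_eq_iff sum_distrib_left mult_ac)
qed

lemma Ls_ker:
  assumes w: "w \<in> fvs.span (G0 i0)" and L0: "Ls i0 w = 0"
  shows "w = 0"
proof -
  define c where "c p = (\<Sum>z'<dZ. cnj (sl (fst p) (snd p) i0 z') * w z')" for p
  have "0 = (\<Sum>z<dZ. cnj (w z) * Ls i0 w z)" using L0 by simp
  also have "\<dots> = (\<Sum>z<dZ. \<Sum>p\<in>PP. c p * (cnj (w z) * sl (fst p) (snd p) i0 z))"
    unfolding Ls_repr c_def by (simp add: sum_distrib_left mult_ac)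
  also have "\<dots> = (\<Sum>p\<in>PP. c p * (\<Sum>z<dZ. cnj (w z) * sl (fst p) (snd p) i0 z))"
    by (subst sum.swap) (simp add: sum_distrib_left)
  also have "\<dots> = (\<Sum>p\<in>PP. c p * cnj (c p))"
    unfolding c_def by (simp add: mult.commute)
  finally have cs: "(\<Sum>p\<in>PP. c p * cnj (c p)) = 0" by simp
  have c0: "c p = 0" if "p \<in> PP" for p using sum_sq_zero[OF _ cs that] by simp
  obtain u where u: "w = (\<lambda>z. \<Sum>v\<in>G0 i0. u v * v z)"
    using w unfolding span_finite_iff[OF finite_G0] by blast
  have orth: "(\<Sum>z<dZ. cnj (v z) * w z) = 0" if "v \<in> G0 i0" for v
  proof -
    from that obtain p where "p \<in> PP" "v = sl (fst p) (snd p) i0" unfolding G0_def by blast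
    then show ?thesis using c0 unfolding c_def by simp
  qed
  have "(\<Sum>z<dZ. w z * cnj (w z)) = (\<Sum>z<dZ. \<Sum>v\<in>G0 i0. cnj (u v) * (cnj (v z) * w z))"
    by (subst (2) u) (simp add: sum_distrib_left sum_distrib_right mult_ac)
  also have "\<dots> = (\<Sum>v\<in>G0 i0. cnj (u v) * (\<Sum>z<dZ. cnj (v z) * w z))"
    by (subst sum.swap) (simp add: sum_distrib_left)
  also have "\<dots> = 0" using orth by simp
  finally have ws: "(\<Sum>z<dZ. w z * cnj (w z)) = 0" .
  show "w = 0"
  proof
    fix z show "w z = 0 z"
    proof (cases "z < dZ")
      case True
      then show ?thesis using sum_sq_zero[OF _ ws] by simp
    next
      case False
      have "\<And>v. v \<in> G0 i0 \<Longrightarrow> v z = 0" using False by (auto simp: G0_def sl_out)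
      then show ?thesis using u by (auto intro!: sum.neutral)
    qed
  qed
qed

lemma Fset_range:
  assumes f: "f \<in> Fset"
  shows "\<exists>i0 h. i0 < d \<and> f = Ls i0 h"
proof -
  obtain k y i0 where kyi: "k < nB" "y < dY" "i0 < d" "f = sl k y i0"
    using f Fset_props(1) unfolding SL_def by auto
  have "f \<in> G0 i0" unfolding G0_def using kyi by (intro image_eqI[of _ _ "(k,y)"]) auto
  then have fs: "f \<in> fvs.span (G0 i0)" by (rule fvs.span_base)
  have "f \<in> Ls i0 ` fvs.span (G0 i0)"
    using inj_surj_span[OF finite_G0 Ls_lin _ _ fs] Ls_in Ls_ker by blast
  then show ?thesis using kyi(3) by blast
qed

end

context keyctx begin

definition OZ where "OZ = (\<lambda>p. (\<lambda>(z,i). if z < dZ \<and> i < d then (Bs!(fst p)) (g (z, snd p)) i else 0)) ` PP"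

definition E2 where "E2 = (\<lambda>(b,y). (\<lambda>(z,i). if z < dZ \<and> i < d then b (g (z,y), i) else 0)) ` (bset \<times> {..<dY})"

lemma finite_OZ: "finite OZ" unfolding OZ_def by simp
lemma finite_E2: "finite E2" unfolding E2_def using bset_props(4) by simp

lemma card_E2: "card E2 \<le> card bset * dY"
  unfolding E2_def using card_image_le[of "bset \<times> {..<dY}" "\<lambda>(b,y). (\<lambda>(z,i). if z < dZ \<and> i < d then b (g (z,y), i) else 0)"] bset_props(4)
  by (simp add: card_cartesian_product)

lemma OZ_sub: "OZ \<subseteq> fvs.span E2"
proof
  fix v assume "v \<in> OZ"
  then obtain p where p: "p \<in> PP" "v = (\<lambda>(z,i). if z < dZ \<and> i < d then (Bs!(fst p)) (g (z,snd p)) i else 0)"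
    unfolding OZ_def by blast
  define k where "k = fst p"
  define y where "y = snd p"
  have ky: "k < nB" "y < dY" "v = (\<lambda>(z,i). if z < dZ \<and> i < d then (Bs!k) (g (z,y)) i else 0)"
    using p unfolding k_def y_def by auto
  have "opv k \<in> fvs.span bset" using bset_props(3) ky(1) OB_def by auto
  then obtain u where u: "opv k = (\<lambda>x. \<Sum>b\<in>bset. u b * b x)"
    unfolding span_finite_iff[OF bset_props(4)] by blast
  have "v = (\<lambda>x. \<Sum>b\<in>bset. u b * (\<lambda>(z,i). if z < dZ \<and> i < d then b (g (z,y), i) else 0) x)"
  proof
    fix x :: "nat \<times> nat"
    obtain z i where x: "x = (z,i)" by fastforce
    show "v x = (\<Sum>b\<in>bset. u b * (\<lambda>(z,i). if z < dZ \<and> i < d then b (g (z,y), i) else 0) x)"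
    proof (cases "z < dZ \<and> i < d")
      case True
      have "v x = opv k (g (z,y), i)" using True ky x g_in by (simp add: opv_def)
      also have "\<dots> = (\<Sum>b\<in>bset. u b * b (g (z,y), i))" using fun_cong[OF u, of "(g (z,y), i)"] by simp
      finally show ?thesis using True x by simp
    next
      case False
      then show ?thesis using ky x by (auto intro!: sum.neutral)
    qed
  qed
  also have "\<dots> \<in> fvs.span E2"
    using ky(2) by (intro in_span_sum bset_props(4)) (auto simp: E2_def)
  finally show "v \<in> fvs.span E2" .
qed

lemma coef_sum:
  assumes "z < dZ" "i < d"
  shows "(\<Sum>p\<in>PP. (\<Sum>z'<dZ. h z' * cnj ((Bs!(fst p)) (g (z', snd p)) j)) * (Bs!(fst p)) (g (z, snd p)) i)
    = (\<Sum>z'<dZ. Gm i j z z' * h z')"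
proof -
  have "(\<Sum>p\<in>PP. (\<Sum>z'<dZ. h z' * cnj ((Bs!(fst p)) (g (z', snd p)) j)) * (Bs!(fst p)) (g (z, snd p)) i)
     = (\<Sum>k<nB. \<Sum>y<dY. (\<Sum>z'<dZ. h z' * cnj ((Bs!k) (g (z', y)) j)) * (Bs!k) (g (z, y)) i)"
    by (simp add: sum.cartesian_product case_prod_unfold)
  also have "\<dots> = (\<Sum>y<dY. \<Sum>k<nB. (\<Sum>z'<dZ. h z' * cnj ((Bs!k) (g (z', y)) j)) * (Bs!k) (g (z, y)) i)"
    by (rule sum.swap)
  also have "\<dots> = (\<Sum>y<dY. \<Sum>k<nB. \<Sum>z'<dZ. (Bs!k) (g (z,y)) i * cnj ((Bs!k) (g (z',y)) j) * h z')"
    by (intro sum.cong refl) (simp add: sum_distrib_right sum_distrib_left mult_ac)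
  also have "\<dots> = (\<Sum>z'<dZ. \<Sum>y<dY. \<Sum>k<nB. (Bs!k) (g (z,y)) i * cnj ((Bs!k) (g (z',y)) j) * h z')"
    by (rule swap3)
  also have "\<dots> = (\<Sum>z'<dZ. Gm i j z z' * h z')"
    by (simp add: Gm_def sum_distrib_right)
  finally show ?thesis .
qed

definition Uf where "Uf = (\<lambda>(f,j). (\<lambda>(z,i). if i = j then f z else (0::complex)))"

lemma Fset_out: "f \<in> Fset \<Longrightarrow> \<not> z < dZ \<Longrightarrow> f z = 0"
  using Fset_props(1) unfolding SL_def by (auto simp: sl_out)

lemma U_in:
  assumes f: "f \<in> Fset" and j: "j < d"
  shows "Uf (f,j) \<in> fvs.span OZ"
proof -
  obtain i0 h where ih: "i0 < d" "f = Ls i0 h" using Fset_range[OF f] by blast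
  define coef where "coef p = (\<Sum>z'<dZ. h z' * cnj ((Bs!(fst p)) (g (z', snd p)) j))" for p
  have "Uf (f,j) = (\<lambda>x. \<Sum>p\<in>PP. coef p * (\<lambda>(z,i). if z < dZ \<and> i < d then (Bs!(fst p)) (g (z, snd p)) i else 0) x)"
  proof
    fix x :: "nat \<times> nat"
    obtain z i where x: "x = (z,i)" by fastforce
    show "Uf (f,j) x = (\<Sum>p\<in>PP. coef p * (\<lambda>(z,i). if z < dZ \<and> i < d then (Bs!(fst p)) (g (z, snd p)) i else 0) x)"
    proof (cases "z < dZ \<and> i < d")
      case True
      have "(\<Sum>p\<in>PP. coef p * (\<lambda>(z,i). if z < dZ \<and> i < d then (Bs!(fst p)) (g (z, snd p)) i else 0) x)
        = (\<Sum>p\<in>PP. coef p * (Bs!(fst p)) (g (z, snd p)) i)" using True x by simp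
      also have "\<dots> = (\<Sum>z'<dZ. Gm i j z z' * h z')"
        unfolding coef_def using coef_sum True by simp
      also have "\<dots> = (\<Sum>z'<dZ. (if i = j then Gm i0 i0 z z' else 0) * h z')"
      proof (intro sum.cong refl)
        fix z' assume "z' \<in> {..<dZ}"
        then show "Gm i j z z' * h z' = (if i = j then Gm i0 i0 z z' else 0) * h z'"
        proof (cases "i = j")
          case True2: True
          have "Gm i j z z' = Gm 0 0 z z'" using Gm_delta[of i j z z'] True True2 j \<open>z' \<in> {..<dZ}\<close> by simp
          moreover have "Gm i0 i0 z z' = Gm 0 0 z z'" using Gm_diag[of i0 z z'] ih(1) True \<open>z' \<in> {..<dZ}\<close> by simp
          ultimately show ?thesis using True2 by simp
        next
          case False2: False
          have "Gm i j z z' = 0" using Gm_delta[of i j z z'] True False2 j \<open>z' \<in> {..<dZ}\<close> by simp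
          then show ?thesis using False2 by simp
        qed
      qed
      also have "\<dots> = Uf (f,j) x"
        using True x ih(2) by (simp add: Uf_def Ls_def)
      finally show ?thesis by simp
    next
      case False
      have "Uf (f,j) x = 0"
        using False x j Fset_out[OF f] by (auto simp: Uf_def)
      then show ?thesis using False x by (auto intro!: sum.neutral)
    qed
  qed
  also have "\<dots> \<in> fvs.span OZ"
    by (intro in_span_sum) (auto simp: OZ_def)
  finally show ?thesis .
qed

lemma U_indep: "inj_on Uf (Fset \<times> {..<d}) \<and> fvs.independent (Uf ` (Fset \<times> {..<d}))"
proof (rule indep_family)
  show "finite (Fset \<times> {..<d})" using Fset_props(4) by simp
  fix c :: "(nat \<Rightarrow> complex) \<times> nat \<Rightarrow> complex"
  assume h: "\<And>x. (\<Sum>p\<in>Fset \<times> {..<d}. c p * Uf p x) = 0"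
  show "\<forall>p\<in>Fset \<times> {..<d}. c p = 0"
  proof
    fix p assume p: "p \<in> Fset \<times> {..<d}"
    obtain f j where fj: "p = (f,j)" "f \<in> Fset" "j < d" using p by auto
    have "(\<Sum>f\<in>Fset. c (f,j) * f z) = 0" for z
    proof -
      have "(\<Sum>p\<in>Fset \<times> {..<d}. c p * Uf p (z,j)) = (\<Sum>p\<in>Fset \<times> {..<d}. c p * (if j = snd p then fst p z else 0))"
        by (intro sum.cong refl) (auto simp: Uf_def)
      also have "\<dots> = (\<Sum>f\<in>Fset. \<Sum>j'<d. c (f,j') * (if j = j' then f z else 0))"
        unfolding sum.cartesian_product by (simp add: case_prod_unfold)
      also have "\<dots> = (\<Sum>f\<in>Fset. c (f,j) * f z)"
        using fj(3) by (simp add: if_distrib cong: if_cong)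
      finally show ?thesis using h[of "(z,j)"] by simp
    qed
    then show "c p = 0"
      using indep_coeffs_zero[OF Fset_props(4,2), of "\<lambda>f. c (f,j)"] fj by blast
  qed
qed

lemma lower: "card Fset * d \<le> card bset * dY"
proof -
  have "Uf ` (Fset \<times> {..<d}) \<subseteq> fvs.span E2"
  proof
    fix x assume "x \<in> Uf ` (Fset \<times> {..<d})"
    then obtain f j where "f \<in> Fset" "j < d" "x = Uf (f,j)" by auto
    then have "x \<in> fvs.span OZ" using U_in by simp
    also have "fvs.span OZ \<subseteq> fvs.span E2"
      using OZ_sub fvs.span_mono fvs.span_span by blast
    finally show "x \<in> fvs.span E2" .
  qed
  then have "card (Uf ` (Fset \<times> {..<d})) \<le> card E2"
    using fvs.independent_span_bound[OF finite_E2] U_indep by blast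
  moreover have "card (Uf ` (Fset \<times> {..<d})) = card Fset * d"
    using U_indep by (simp add: card_image card_cartesian_product)
  ultimately show ?thesis using card_E2 by simp
qed

end

context keyctx begin

lemma bset_nonempty: "bset \<noteq> {}"
proof
  assume e: "bset = {}"
  have z: "(Bs!k) a i = 0" if "k < nB" "a < dN" "i < d" for k a i
  proof -
    have "opv k \<in> fvs.span bset" using bset_props(3) that(1) OB_def by auto
    then have "opv k = 0" using e by simp
    then have "opv k (a,i) = 0" by simp
    then show ?thesis using that by (simp add: opv_def)
  qed
  have d0: "0 < d" using d1 by simp
  have "apply_channel d dN Bs (rho1 0) = (\<lambda>a b. 0)"
    by (auto simp: fun_eq_iff apply_channel_nth z intro!: sum.neutral)
  then have "apply_channel dN d Rs (\<lambda>a b. 0) = rho1 0" using rec[OF rho1_density[OF d0]] by simp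
  then have "apply_channel dN d Rs (\<lambda>a b. 0) 0 0 = rho1 0 0 0" by simp
  moreover have "apply_channel dN d Rs (\<lambda>a b. 0) 0 0 = 0" by (simp add: apply_channel_def)
  moreover have "rho1 0 0 0 = 1" using d0 by (simp add: rho1_def ket_def)
  ultimately show False by simp
qed

lemma key_bound: "d \<le> dY"
proof (rule ccontr)
  assume "\<not> d \<le> dY"
  then have lt: "dY < d" by simp
  have r1: "1 \<le> card bset" using bset_nonempty bset_props(4) by (simp add: Suc_le_eq card_gt_0_iff)
  have u: "card bset * d \<le> card Fset * dY" by (rule upper)
  have l: "card Fset * d \<le> card bset * dY" by (rule lower)
  have "card bset * dY < card bset * d" using lt r1 by simp
  also have "\<dots> \<le> card Fset * dY" by (rule u)
  finally have "card bset * dY < card Fset * dY" .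
  then have s1: "0 < card Fset" by (cases "card Fset") auto
  have "card Fset * dY < card Fset * d" using lt s1 by simp
  also have "\<dots> \<le> card bset * dY" by (rule l)
  finally show False using \<open>card bset * dY < card Fset * dY\<close> by simp
qed

end

lemma key_lemma:
  fixes d dN dZ dY :: nat and g :: "nat \<times> nat \<Rightarrow> nat" and Bs Rs :: "cmat list"
  assumes "1 \<le> d"
    and "bij_betw g ({..<dZ} \<times> {..<dY}) {..<dN}"
    and "is_channel dN d Rs"
    and "\<And>\<rho>. density d \<rho> \<Longrightarrow> apply_channel dN d Rs (apply_channel d dN Bs \<rho>) = \<rho>"
    and "\<And>\<rho> \<rho>' a b. density d \<rho> \<Longrightarrow> density d \<rho>' \<Longrightarrow> a < dZ \<Longrightarrow> b < dZ \<Longrightarrow>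
       (\<Sum>y<dY. apply_channel d dN Bs \<rho> (g (a,y)) (g (b,y))) = (\<Sum>y<dY. apply_channel d dN Bs \<rho>' (g (a,y)) (g (b,y)))"
  shows "d \<le> dY"
proof -
  interpret keyctx d dN dZ dY g Bs Rs by (unfold_locales; fact assms)
  show ?thesis by (rule key_bound)
qed

definition num :: "nat \<Rightarrow> nat \<Rightarrow> (nat \<Rightarrow> nat) \<Rightarrow> nat" where
  "num q W \<delta> = (\<Sum>k<W. q ^ k * \<delta> k)"

lemma num_Suc: "num q (Suc W) \<delta> = num q W \<delta> + q ^ W * \<delta> W"
  by (simp add: num_def)

lemma num_less:
  assumes "\<And>k. k < W \<Longrightarrow> \<delta> k < q"
  shows "num q W \<delta> < q ^ W"
  using assms
proof (induction W)
  case 0 then show ?case by (simp add: num_def)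
next
  case (Suc W)
  have ih: "num q W \<delta> < q ^ W" using Suc by simp
  have dW: "\<delta> W + 1 \<le> q" using Suc.prems[of W] by simp
  have "num q (Suc W) \<delta> = num q W \<delta> + q ^ W * \<delta> W" by (rule num_Suc)
  also have "\<dots> < q ^ W + q ^ W * \<delta> W" using ih by simp
  also have "\<dots> = q ^ W * (\<delta> W + 1)" by (simp add: algebra_simps)
  also have "\<dots> \<le> q ^ W * q" using dW by (intro mult_le_mono2) simp
  finally show ?case by (simp add: mult.commute)
qed

lemma digit_add_high:
  assumes q: "q > 0" and A: "A < q ^ W" and k: "k < W"
  shows "digit q (A + q ^ W * t) k = digit q A k"
proof -
  have "q ^ W = q ^ k * q ^ (W - k)" using k by (simp add: power_add[symmetric])
  then have "(A + q ^ W * t) div q ^ k = A div q ^ k + q ^ (W - k) * t"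
    using q by (simp add: mult.assoc)
  moreover have "q dvd q ^ (W - k) * t" using k by simp
  ultimately show ?thesis unfolding digit_def by (simp add: mod_add_right_eq[symmetric])
qed

lemma digit_add_top:
  assumes q: "q > 0" and A: "A < q ^ W" and t: "t < q"
  shows "digit q (A + q ^ W * t) W = t"
proof -
  have "(A + q ^ W * t) div q ^ W = t" using A q by simp
  then show ?thesis using t unfolding digit_def by simp
qed

lemma digit_num:
  assumes q: "q > 0" and "\<And>k. k < W \<Longrightarrow> \<delta> k < q" and "k < W"
  shows "digit q (num q W \<delta>) k = \<delta> k"
  using assms(2,3)
proof (induction W)
  case 0 then show ?case by simp
next
  case (Suc W)
  have lt: "num q W \<delta> < q ^ W" using num_less Suc.prems by simp
  show ?case
  proof (cases "k < W")
    case True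
    then show ?thesis unfolding num_Suc using digit_add_high[OF q lt True] Suc by simp
  next
    case False
    then have "k = W" using Suc.prems by simp
    then show ?thesis unfolding num_Suc using digit_add_top[OF q lt] Suc.prems by simp
  qed
qed

lemma digit_less: "q > 0 \<Longrightarrow> digit q x k < q" by (simp add: digit_def)

lemma num_digit:
  assumes q: "q > 0"
  shows "x < q ^ W \<Longrightarrow> num q W (digit q x) = x"
proof (induction W arbitrary: x)
  case 0 then show ?case by (simp add: num_def)
next
  case (Suc W)
  have "x = x mod q ^ W + q ^ W * (x div q ^ W)" by simp
  have "digit q x k = digit q (x mod q ^ W) k" if "k < W" for k
  proof -
    have "x mod q ^ W < q ^ W" using q by simp
    then have "digit q (x mod q ^ W + q ^ W * (x div q ^ W)) k = digit q (x mod q ^ W) k"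
      using digit_add_high[OF q _ that] by blast
    then show ?thesis by simp
  qed
  then have "num q W (digit q x) = num q W (digit q (x mod q ^ W))"
    by (simp add: num_def)
  also have "\<dots> = x mod q ^ W" using Suc.IH q by simp
  finally have a: "num q W (digit q x) = x mod q ^ W" .
  have "x div q ^ W < q" using Suc.prems q by (simp add: div_less_iff_less_mult mult.commute)
  then have b: "digit q x W = x div q ^ W" by (simp add: digit_def)
  show ?case unfolding num_Suc a b by simp
qed

lemma digits_eq:
  assumes "q > 0" "x < q ^ W" "y < q ^ W" "\<And>k. k < W \<Longrightarrow> digit q x k = digit q y k"
  shows "x = y"
proof -
  have "num q W (digit q x) = num q W (digit q y)" using assms(4) by (simp add: num_def)
  then show ?thesis using num_digit[OF assms(1)] assms(2,3) by simp
qed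

lemma rank_mono_strict:
  assumes "finite S" "k1 \<in> S" "k1 < k2"
  shows "rank_in S k1 < rank_in S k2"
proof -
  have "{x \<in> S. x < k1} \<subset> {x \<in> S. x < k2}" using assms by auto
  then show ?thesis unfolding rank_in_def using assms(1) by (intro psubset_card_mono) auto
qed

lemma rank_less_card: "finite S \<Longrightarrow> k \<in> S \<Longrightarrow> rank_in S k < card S"
  unfolding rank_in_def by (intro psubset_card_mono) auto

lemma rank_less_iff:
  assumes "finite S" "y \<in> S" "k \<in> S"
  shows "rank_in S y < rank_in S k \<longleftrightarrow> y < k"
proof
  assume "rank_in S y < rank_in S k"
  show "y < k"
  proof (rule ccontr)
    assume "\<not> y < k"
    then have "k = y \<or> k < y" by auto
    then show False
    proof
      assume "k = y" then show False using \<open>rank_in S y < rank_in S k\<close> by simp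
    next
      assume "k < y" then show False using rank_mono_strict[OF assms(1,3)] \<open>rank_in S y < rank_in S k\<close> by fastforce
    qed
  qed
next
  assume "y < k" then show "rank_in S y < rank_in S k" using rank_mono_strict[OF assms(1,2)] by simp
qed

lemma rank_inj: "finite S \<Longrightarrow> inj_on (rank_in S) S"
proof (rule inj_onI, rule ccontr)
  fix x y assume f: "finite S" and xy: "x \<in> S" "y \<in> S" "rank_in S x = rank_in S y" "x \<noteq> y"
  then have "x < y \<or> y < x" by auto
  then show False using rank_mono_strict[OF f xy(1), of y] rank_mono_strict[OF f xy(2), of x] xy(3) by auto
qed

lemma rank_bij: "finite S \<Longrightarrow> bij_betw (rank_in S) S {..<card S}"
proof -
  assume f: "finite S"
  have sub: "rank_in S ` S \<subseteq> {..<card S}" using rank_less_card[OF f] by auto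
  have "card (rank_in S ` S) = card S" using card_image[OF rank_inj[OF f]] .
  then have "rank_in S ` S = {..<card S}" using sub by (intro card_subset_eq) auto
  then show ?thesis using rank_inj[OF f] by (simp add: bij_betw_def)
qed

lemma rank_rank:
  assumes "finite B" "A \<subseteq> B" "k \<in> B"
  shows "rank_in (rank_in B ` A) (rank_in B k) = rank_in A k"
proof -
  have "{x \<in> rank_in B ` A. x < rank_in B k} = rank_in B ` {y \<in> A. y < k}"
  proof (intro set_eqI iffI)
    fix x assume "x \<in> {x \<in> rank_in B ` A. x < rank_in B k}"
    then obtain y where y: "y \<in> A" "x = rank_in B y" "rank_in B y < rank_in B k" by blast
    then have "y < k" using rank_less_iff[OF assms(1) _ assms(3), of y] assms(2) by blast
    then show "x \<in> rank_in B ` {y \<in> A. y < k}" using y by blast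
  next
    fix x assume "x \<in> rank_in B ` {y \<in> A. y < k}"
    then obtain y where y: "y \<in> A" "x = rank_in B y" "y < k" by blast
    then have "rank_in B y < rank_in B k" using rank_less_iff[OF assms(1) _ assms(3), of y] assms(2) by blast
    then show "x \<in> {x \<in> rank_in B ` A. x < rank_in B k}" using y by blast
  qed
  moreover have "inj_on (rank_in B) {y \<in> A. y < k}"
  proof (rule inj_on_subset[OF rank_inj[OF assms(1)]])
    show "{y \<in> A. y < k} \<subseteq> B" using assms(2) by blast
  qed
  ultimately have "card {x \<in> rank_in B ` A. x < rank_in B k} = card {y \<in> A. y < k}"
    by (simp add: card_image)
  then show ?thesis by (simp only: rank_in_def[of "rank_in B ` A"] rank_in_def[of A])
qed

lemma rank_compl:
  assumes "finite B" "A \<subseteq> B"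
  shows "{..<card B} - rank_in B ` A = rank_in B ` (B - A)"
proof -
  have "rank_in B ` (B - A) = rank_in B ` B - rank_in B ` A"
    using rank_inj[OF assms(1)] assms(2) by (intro inj_on_image_set_diff) auto
  then show ?thesis using rank_bij[OF assms(1)] unfolding bij_betw_def by simp
qed

lemma merge_num: "merge_idx q W S a c = num q W (\<lambda>k. if k \<in> S then digit q a (rank_in S k) else digit q c (rank_in ({..<W} - S) k))"
  unfolding merge_idx_def num_def ..

lemma merge_less: "q > 0 \<Longrightarrow> merge_idx q W S a c < q ^ W"
  unfolding merge_num by (rule num_less) (auto simp: digit_less)

lemma merge_digit:
  "q > 0 \<Longrightarrow> k < W \<Longrightarrow> digit q (merge_idx q W S a c) k = (if k \<in> S then digit q a (rank_in S k) else digit q c (rank_in ({..<W} - S) k))"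
  unfolding merge_num by (rule digit_num) (auto simp: digit_less)

lemma merge_bij:
  assumes q: "q > 0" and S: "S \<subseteq> {..<W}"
  shows "bij_betw (\<lambda>(a,c). merge_idx q W S a c) ({..<q ^ card S} \<times> {..<q ^ (W - card S)}) {..<q ^ W}"
proof -
  have fS: "finite S" using S finite_subset by blast
  define C where "C = {..<W} - S"
  have fC: "finite C" unfolding C_def by simp
  have cC: "card C = W - card S" unfolding C_def using S fS by (simp add: card_Diff_subset)
  have inj: "inj_on (\<lambda>(a,c). merge_idx q W S a c) ({..<q ^ card S} \<times> {..<q ^ (W - card S)})"
  proof (rule inj_onI, clarsimp)
    fix a c a' c'
    assume a: "a < q ^ card S" "a' < q ^ card S" and c: "c < q ^ (W - card S)" "c' < q ^ (W - card S)"
      and eq: "merge_idx q W S a c = merge_idx q W S a' c'"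
    have "a = a'"
    proof (rule digits_eq[OF q a])
      fix r assume r: "r < card S"
      have "r \<in> rank_in S ` S" using rank_bij[OF fS] r unfolding bij_betw_def by simp
      then obtain k where k: "k \<in> S" "rank_in S k = r" by blast
      have kW: "k < W" using k S by auto
      have "digit q (merge_idx q W S a c) k = digit q a r" using merge_digit[OF q kW] k by simp
      moreover have "digit q (merge_idx q W S a' c') k = digit q a' r" using merge_digit[OF q kW] k by simp
      ultimately show "digit q a r = digit q a' r" using eq by simp
    qed
    moreover have "c = c'"
    proof (rule digits_eq[OF q c])
      fix r assume r: "r < W - card S"
      have "r \<in> rank_in C ` C" using rank_bij[OF fC] r cC unfolding bij_betw_def by simp
      then obtain k where k: "k \<in> C" "rank_in C k = r" by blast
      have kW: "k < W" and kS: "k \<notin> S" using k C_def by auto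
      have "digit q (merge_idx q W S a c) k = digit q c r" using merge_digit[OF q kW] k kS C_def by simp
      moreover have "digit q (merge_idx q W S a' c') k = digit q c' r" using merge_digit[OF q kW] k kS C_def by simp
      ultimately show "digit q c r = digit q c' r" using eq by simp
    qed
    ultimately show "a = a' \<and> c = c'" by simp
  qed
  have sub: "(\<lambda>(a,c). merge_idx q W S a c) ` ({..<q ^ card S} \<times> {..<q ^ (W - card S)}) \<subseteq> {..<q ^ W}"
    using merge_less[OF q] by auto
  have "card ((\<lambda>(a,c). merge_idx q W S a c) ` ({..<q ^ card S} \<times> {..<q ^ (W - card S)})) = q ^ card S * q ^ (W - card S)"
    using card_image[OF inj] by (simp add: card_cartesian_product)
  also have "\<dots> = q ^ W" using S fS card_mono[of "{..<W}" S] by (simp add: power_add[symmetric])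
  finally have "(\<lambda>(a,c). merge_idx q W S a c) ` ({..<q ^ card S} \<times> {..<q ^ (W - card S)}) = {..<q ^ W}"
    using sub by (intro card_subset_eq) auto
  then show ?thesis using inj by (simp add: bij_betw_def)
qed

lemma card_rank_img: "finite B \<Longrightarrow> A \<subseteq> B \<Longrightarrow> card (rank_in B ` A) = card A"
  using card_image inj_on_subset rank_inj by metis

lemma ptrace_comp:
  assumes q: "q > 0" and S12: "S1 \<subseteq> S2" and S2: "S2 \<subseteq> {..<W}"
  shows "ptrace q W S1 \<rho> = ptrace q (card S2) (rank_in S2 ` S1) (ptrace q W S2 \<rho>)"
proof -
  have fS2: "finite S2" using S2 finite_subset by blast
  have fS1: "finite S1" using S12 fS2 finite_subset by blast
  define s1 where "s1 = card S1"
  define s2 where "s2 = card S2"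
  define S1' where "S1' = rank_in S2 ` S1"
  define C1 where "C1 = {..<W} - S1"
  define T where "T = rank_in C1 ` (S2 - S1)"
  have fC1: "finite C1" unfolding C1_def by simp
  have cS1': "card S1' = s1" unfolding S1'_def s1_def by (rule card_rank_img[OF fS2 S12])
  have s12: "s1 \<le> s2" unfolding s1_def s2_def using card_mono[OF fS2 S12] .
  have s2W: "s2 \<le> W" unfolding s2_def using card_mono[of "{..<W}" S2] S2 by simp
  have cC1: "card C1 = W - s1" unfolding C1_def s1_def using S12 S2 fS1 by (subst card_Diff_subset) auto
  have TC: "T \<subseteq> {..<W - s1}"
  proof -
    have "T \<subseteq> rank_in C1 ` C1" unfolding T_def C1_def using S2 by auto
    also have "\<dots> = {..<card C1}" using rank_bij[OF fC1] by (simp add: bij_betw_def)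
    finally show ?thesis using cC1 by simp
  qed
  have cT: "card T = s2 - s1"
  proof -
    have "card T = card (S2 - S1)" unfolding T_def using S2 by (intro card_rank_img[OF fC1]) (auto simp: C1_def)
    also have "\<dots> = s2 - s1" unfolding s1_def s2_def using S12 fS1 by (simp add: card_Diff_subset)
    finally show ?thesis .
  qed
  define \<phi> where "\<phi> = (\<lambda>(c2,c1). merge_idx q (W - s1) T c2 c1)"
  have bij: "bij_betw \<phi> ({..<q ^ (s2 - s1)} \<times> {..<q ^ (W - s2)}) {..<q ^ (W - s1)}"
  proof -
    have "(W - s1) - card T = W - s2" using cT s12 s2W by simp
    then show ?thesis using merge_bij[OF q TC] cT unfolding \<phi>_def by simp
  qed
  have KI: "merge_idx q W S1 a (merge_idx q (W - s1) T c2 c1) = merge_idx q W S2 (merge_idx q s2 S1' a c2) c1" for a c2 c1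
  proof (rule digits_eq[OF q merge_less[OF q] merge_less[OF q]])
    fix k assume k: "k < W"
    show "digit q (merge_idx q W S1 a (merge_idx q (W - s1) T c2 c1)) k = digit q (merge_idx q W S2 (merge_idx q s2 S1' a c2) c1) k"
    proof (cases "k \<in> S1")
      case True
      then have kS2: "k \<in> S2" using S12 by auto
      have r: "rank_in S2 k < s2" unfolding s2_def using rank_less_card[OF fS2 kS2] .
      have "rank_in S2 k \<in> S1'" unfolding S1'_def using True by simp
      moreover have "rank_in S1' (rank_in S2 k) = rank_in S1 k" unfolding S1'_def by (rule rank_rank[OF fS2 S12 kS2])
      ultimately show ?thesis using True kS2 k r by (simp add: merge_digit[OF q])
    next
      case False
      then have kC1: "k \<in> C1" using k C1_def by auto
      have rC: "rank_in C1 k < W - s1" using rank_less_card[OF fC1 kC1] cC1 by simp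
      have rC1: "rank_in ({..<W} - S1) k = rank_in C1 k" unfolding C1_def ..
      show ?thesis
      proof (cases "k \<in> S2")
        case True
        have inT: "rank_in C1 k \<in> T" unfolding T_def using True False by simp
        have r: "rank_in S2 k < s2" unfolding s2_def using rank_less_card[OF fS2 True] .
        have nS1': "rank_in S2 k \<notin> S1'"
        proof
          assume "rank_in S2 k \<in> S1'"
          then obtain k' where "k' \<in> S1" "rank_in S2 k' = rank_in S2 k" unfolding S1'_def by auto
          then have "k' = k" using rank_inj[OF fS2] S12 True by (auto dest: inj_onD)
          then show False using False \<open>k' \<in> S1\<close> by simp
        qed
        have e1: "rank_in T (rank_in C1 k) = rank_in (S2 - S1) k"
          unfolding T_def by (rule rank_rank[OF fC1]) (use S2 kC1 in \<open>auto simp: C1_def\<close>)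
        have cmp: "{..<s2} - S1' = rank_in S2 ` (S2 - S1)"
          unfolding s2_def S1'_def by (rule rank_compl[OF fS2 S12])
        have e2: "rank_in ({..<s2} - S1') (rank_in S2 k) = rank_in (S2 - S1) k"
          unfolding cmp by (rule rank_rank[OF fS2 _ True]) auto
        show ?thesis using True False k rC r inT nS1' e1 e2 rC1 by (simp add: merge_digit[OF q])
      next
        case nS2: False
        have nT: "rank_in C1 k \<notin> T"
        proof
          assume "rank_in C1 k \<in> T"
          then obtain k' where "k' \<in> S2 - S1" "rank_in C1 k' = rank_in C1 k" unfolding T_def by auto
          moreover have "k' \<in> C1" using \<open>k' \<in> S2 - S1\<close> S2 C1_def by auto
          ultimately have "k' = k" using rank_inj[OF fC1] kC1 by (auto dest: inj_onD)
          then show False using nS2 \<open>k' \<in> S2 - S1\<close> by simp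
        qed
        have cmp: "{..<W - s1} - T = rank_in C1 ` ({..<W} - S2)"
        proof -
          have "{..<card C1} - rank_in C1 ` (S2 - S1) = rank_in C1 ` (C1 - (S2 - S1))"
            by (rule rank_compl[OF fC1]) (use S2 in \<open>auto simp: C1_def\<close>)
          moreover have "C1 - (S2 - S1) = {..<W} - S2" unfolding C1_def using S12 by auto
          ultimately show ?thesis using cC1 T_def by simp
        qed
        have e3: "rank_in ({..<W - s1} - T) (rank_in C1 k) = rank_in ({..<W} - S2) k"
          unfolding cmp by (rule rank_rank[OF fC1]) (use k nS2 kC1 S12 in \<open>auto simp: C1_def\<close>)
        show ?thesis using nS2 False k rC nT e3 rC1 by (simp add: merge_digit[OF q])
      qed
    qed
  qed
  show ?thesis
  proof (rule ext, rule ext)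
    fix a b
    show "ptrace q W S1 \<rho> a b = ptrace q (card S2) (rank_in S2 ` S1) (ptrace q W S2 \<rho>) a b"
    proof (cases "a < q ^ s1 \<and> b < q ^ s1")
      case True
      have "ptrace q W S1 \<rho> a b = (\<Sum>c<q ^ (W - s1). \<rho> (merge_idx q W S1 a c) (merge_idx q W S1 b c))"
        using True unfolding ptrace_def s1_def by simp
      also have "\<dots> = (\<Sum>p\<in>{..<q ^ (s2 - s1)} \<times> {..<q ^ (W - s2)}. \<rho> (merge_idx q W S1 a (\<phi> p)) (merge_idx q W S1 b (\<phi> p)))"
        by (rule sum.reindex_bij_betw[OF bij, symmetric])
      also have "\<dots> = (\<Sum>c2<q ^ (s2 - s1). \<Sum>c1<q ^ (W - s2). \<rho> (merge_idx q W S2 (merge_idx q s2 S1' a c2) c1) (merge_idx q W S2 (merge_idx q s2 S1' b c2) c1))"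
        unfolding sum.cartesian_product \<phi>_def by (simp add: case_prod_unfold KI)
      also have "\<dots> = (\<Sum>c2<q ^ (s2 - s1). ptrace q W S2 \<rho> (merge_idx q s2 S1' a c2) (merge_idx q s2 S1' b c2))"
        using merge_less[OF q] unfolding ptrace_def s2_def by simp
      also have "\<dots> = ptrace q (card S2) (rank_in S2 ` S1) (ptrace q W S2 \<rho>) a b"
        using True cS1' unfolding ptrace_def S1'_def s2_def by simp
      finally show ?thesis .
    next
      case False
      then show ?thesis using cS1' unfolding ptrace_def S1'_def s1_def by auto
    qed
  qed
qed

definition kraus_pt :: "nat \<Rightarrow> nat \<Rightarrow> nat set \<Rightarrow> cmat list \<Rightarrow> cmat list" where
  "kraus_pt q W S Ks = concat (map (\<lambda>K. map (\<lambda>c. (\<lambda>a i. K (merge_idx q W S a c) i)) [0..<q ^ (W - card S)]) Ks)"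

lemma sum_list_concat_map: "(\<Sum>x\<leftarrow>concat (map g xs). f x) = (\<Sum>y\<leftarrow>xs. \<Sum>x\<leftarrow>g y. f x)"
  by (induction xs) auto

lemma sum_list_nth_alt: "(\<Sum>x\<leftarrow>xs. f x) = (\<Sum>k<length xs. f (xs ! k))"
  by (simp add: sum_list_sum_nth atLeast0LessThan)

lemma sum_list_upt0: "(\<Sum>c\<leftarrow>[0..<N]. f c) = (\<Sum>c<N. f c)"
  by (simp add: interv_sum_list_conv_sum_set_nat atLeast0LessThan)

lemma ptrace_channel:
  assumes q: "q > 0"
  shows "ptrace q W S (apply_channel d (q ^ W) Ks \<rho>) = apply_channel d (q ^ card S) (kraus_pt q W S Ks) \<rho>"
proof (rule ext, rule ext)
  fix a b
  show "ptrace q W S (apply_channel d (q ^ W) Ks \<rho>) a b = apply_channel d (q ^ card S) (kraus_pt q W S Ks) \<rho> a b"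
  proof (cases "a < q ^ card S \<and> b < q ^ card S")
    case True
    have "ptrace q W S (apply_channel d (q ^ W) Ks \<rho>) a b =
      (\<Sum>c<q ^ (W - card S). \<Sum>K\<leftarrow>Ks. \<Sum>i<d. \<Sum>j<d. K (merge_idx q W S a c) i * \<rho> i j * cnj (K (merge_idx q W S b c) j))"
      using True merge_less[OF q] unfolding ptrace_def apply_channel_def by simp
    also have "\<dots> = (\<Sum>K\<leftarrow>Ks. \<Sum>c<q ^ (W - card S). \<Sum>i<d. \<Sum>j<d. K (merge_idx q W S a c) i * \<rho> i j * cnj (K (merge_idx q W S b c) j))"
      unfolding sum_list_nth_alt by (rule sum.swap)
    also have "\<dots> = apply_channel d (q ^ card S) (kraus_pt q W S Ks) \<rho> a b"
      using True unfolding apply_channel_def kraus_pt_def sum_list_concat_map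
      by (simp add: sum_list_upt0)
    finally show ?thesis .
  next
    case False
    then show ?thesis unfolding ptrace_def apply_channel_def by auto
  qed
qed

lemma share_block_sub:
  assumes "j \<in> {1..n}"
  shows "share_block w j \<subseteq> {..<total_qudits n w}"
proof -
  have "(\<Sum>i\<in>{1..<j}. w i) + w j = (\<Sum>i\<in>{1..<Suc j}. w i)" using assms by simp
  also have "\<dots> \<le> (\<Sum>i\<in>{1..n}. w i)" using assms by (intro sum_mono2) auto
  finally show ?thesis unfolding share_block_def total_qudits_def by auto
qed

lemma qudits_of_sub: "Z \<subseteq> {1..n} \<Longrightarrow> qudits_of w Z \<subseteq> {..<total_qudits n w}"
  unfolding qudits_of_def using share_block_sub by blast

lemma per_Z:
  fixes t n z q m :: nat and w :: "nat \<Rightarrow> nat" and Ks :: "cmat list"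
    and A Z :: "nat set" and T :: "nat \<Rightarrow> nat set"
  assumes q: "2 \<le> q"
    and qss: "qss_scheme t n z q m w Ks"
    and A: "A \<subseteq> {1..n}" and TA: "\<forall>j\<in>A. T j \<subseteq> share_block w j"
    and rec: "recoverable q n m w Ks (\<Union>j\<in>A. T j)"
    and Z: "Z \<subseteq> A" "card Z \<le> z"
  shows "m \<le> (\<Sum>j\<in>A - Z. card (T j))"
proof -
  have q0: "q > 0" using q by simp
  define W where "W = total_qudits n w"
  define S where "S = (\<Union>j\<in>A. T j)"
  define Zq where "Zq = qudits_of w Z"
  define S1 where "S1 = S \<inter> Zq"
  define S' where "S' = rank_in S ` S1"
  define d where "d = q ^ m"
  define \<Phi> where "\<Phi> \<rho> = apply_channel d (q ^ W) Ks \<rho>" for \<rho>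
  define Bs where "Bs = kraus_pt q W S Ks"
  have SW: "S \<subseteq> {..<W}" unfolding S_def W_def using TA A share_block_sub by blast
  have ZqW: "Zq \<subseteq> {..<W}" unfolding Zq_def W_def using qudits_of_sub Z A by blast
  have fS: "finite S" using SW finite_subset by blast
  have S1S: "S1 \<subseteq> S" and S1Z: "S1 \<subseteq> Zq" unfolding S1_def by auto
  have S'sub: "S' \<subseteq> {..<card S}" unfolding S'_def using rank_less_card[OF fS] S1S by auto
  have cS': "card S' = card S1" unfolding S'_def by (rule card_rank_img[OF fS S1S])
  obtain Rs where Rs: "is_channel (q ^ card S) (q ^ m) Rs"
    "\<And>\<rho>. density (q ^ m) \<rho> \<Longrightarrow> apply_channel (q ^ card S) (q ^ m) Rs (ptrace q W S (\<Phi> \<rho>)) = \<rho>"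
    using rec unfolding recoverable_def S_def W_def \<Phi>_def d_def by blast
  have pt: "ptrace q W S (\<Phi> \<rho>) = apply_channel d (q ^ card S) Bs \<rho>" for \<rho>
    unfolding \<Phi>_def Bs_def by (rule ptrace_channel[OF q0])
  have noinfo: "ptrace q W Zq (\<Phi> \<rho>) = ptrace q W Zq (\<Phi> \<rho>')" if "density d \<rho>" "density d \<rho>'" for \<rho> \<rho>'
  proof -
    have "unauthorized q n m w Ks Z" using qss Z A unfolding qss_scheme_def by auto
    then show ?thesis using that unfolding unauthorized_def no_info_def Zq_def W_def \<Phi>_def d_def by blast
  qed
  have zs: "(\<Sum>y<q ^ (card S - card S'). apply_channel d (q ^ card S) Bs \<rho> (merge_idx q (card S) S' a y) (merge_idx q (card S) S' b y))
      = ptrace q (card Zq) (rank_in Zq ` S1) (ptrace q W Zq (\<Phi> \<rho>)) a b"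
    if ab: "a < q ^ card S'" "b < q ^ card S'" for \<rho> a b
  proof -
    have "(\<Sum>y<q ^ (card S - card S'). apply_channel d (q ^ card S) Bs \<rho> (merge_idx q (card S) S' a y) (merge_idx q (card S) S' b y))
        = ptrace q (card S) S' (ptrace q W S (\<Phi> \<rho>)) a b"
      using ab by (simp add: pt ptrace_def[of q "card S" S'])
    also have "\<dots> = ptrace q W S1 (\<Phi> \<rho>) a b"
      unfolding S'_def using ptrace_comp[OF q0 S1S SW] by simp
    also have "\<dots> = ptrace q (card Zq) (rank_in Zq ` S1) (ptrace q W Zq (\<Phi> \<rho>)) a b"
      using ptrace_comp[OF q0 S1Z ZqW] by simp
    finally show ?thesis .
  qed
  have "d \<le> q ^ (card S - card S')"
  proof (rule key_lemma[where dN = "q ^ card S" and dZ = "q ^ card S'" and g = "\<lambda>(a,y). merge_idx q (card S) S' a y" and Bs = Bs and Rs = Rs])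
    show "1 \<le> d" unfolding d_def using q0 by simp
    show "bij_betw (\<lambda>(a,y). merge_idx q (card S) S' a y) ({..<q ^ card S'} \<times> {..<q ^ (card S - card S')}) {..<q ^ card S}"
      by (rule merge_bij[OF q0 S'sub])
    show "is_channel (q ^ card S) d Rs" using Rs(1) unfolding d_def .
    fix \<rho> assume "density d \<rho>"
    then show "apply_channel (q ^ card S) d Rs (apply_channel d (q ^ card S) Bs \<rho>) = \<rho>"
      using Rs(2)[of \<rho>] unfolding pt d_def by simp
  next
    fix \<rho> \<rho>' a b assume dd: "density d \<rho>" "density d \<rho>'" and ab: "a < q ^ card S'" "b < q ^ card S'"
    have ni: "ptrace q W Zq (\<Phi> \<rho>) = ptrace q W Zq (\<Phi> \<rho>')" by (rule noinfo[OF dd])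
    show "(\<Sum>y<q ^ (card S - card S'). apply_channel d (q ^ card S) Bs \<rho> ((\<lambda>(a,y). merge_idx q (card S) S' a y) (a, y)) ((\<lambda>(a,y). merge_idx q (card S) S' a y) (b, y))) =
          (\<Sum>y<q ^ (card S - card S'). apply_channel d (q ^ card S) Bs \<rho>' ((\<lambda>(a,y). merge_idx q (card S) S' a y) (a, y)) ((\<lambda>(a,y). merge_idx q (card S) S' a y) (b, y)))"
      using zs[OF ab, of \<rho>] zs[OF ab, of \<rho>'] ni by simp
  qed
  then have "m \<le> card S - card S'" unfolding d_def using q by (simp add: power_le_imp_le_exp)
  also have "card S - card S' = card (S - Zq)"
    unfolding cS' S1_def using fS by (simp add: card_Diff_subset_Int)
  also have "\<dots> \<le> card (\<Union>j\<in>A - Z. T j)"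
  proof (rule card_mono)
    have "finite A" using A finite_subset by blast
    moreover have "\<And>j. j \<in> A \<Longrightarrow> finite (T j)"
    proof -
      fix j assume "j \<in> A"
      moreover have "finite (share_block w j)" by (simp add: share_block_def)
      ultimately show "finite (T j)" using TA finite_subset by blast
    qed
    ultimately show "finite (\<Union>j\<in>A - Z. T j)" by auto
    show "S - Zq \<subseteq> (\<Union>j\<in>A - Z. T j)"
      unfolding S_def Zq_def qudits_of_def using TA by blast
  qed
  also have "\<dots> \<le> (\<Sum>j\<in>A - Z. card (T j))"
    using A finite_subset by (intro card_UN_le) blast
  finally show ?thesis .
qed

lemma averaging:
  fixes A :: "nat set" and h :: "nat \<Rightarrow> nat" and m z :: nat
  assumes fA: "finite A" and zA: "z < card A"
    and per: "\<And>Z. Z \<subseteq> A \<Longrightarrow> card Z = z \<Longrightarrow> m \<le> (\<Sum>j\<in>A - Z. h j)"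
  shows "card A * m \<le> (card A - z) * (\<Sum>j\<in>A. h j)"
proof -
  define a where "a = card A"
  define Zs where "Zs = {Z. Z \<subseteq> A \<and> card Z = z}"
  have fZs: "finite Zs" unfolding Zs_def using fA by simp
  have cZs: "card Zs = a choose z" unfolding Zs_def a_def by (rule n_subsets[OF fA])
  have cj: "card {Z \<in> Zs. j \<notin> Z} = (a - 1) choose z" if j: "j \<in> A" for j
  proof -
    have "{Z \<in> Zs. j \<notin> Z} = {Z. Z \<subseteq> A - {j} \<and> card Z = z}" unfolding Zs_def by auto
    moreover have "card (A - {j}) = a - 1" unfolding a_def using j fA by simp
    ultimately show ?thesis using n_subsets[of "A - {j}" z] fA by simp
  qed
  have "(a choose z) * m = (\<Sum>Z\<in>Zs. m)" using cZs by simp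
  also have "\<dots> \<le> (\<Sum>Z\<in>Zs. \<Sum>j\<in>A - Z. h j)" by (intro sum_mono) (auto simp: Zs_def per)
  also have "\<dots> = (\<Sum>Z\<in>Zs. \<Sum>j\<in>A. if j \<notin> Z then h j else 0)"
  proof (rule sum.cong[OF refl])
    fix Z assume "Z \<in> Zs"
    have "(\<Sum>j\<in>A. if j \<notin> Z then h j else 0) = (\<Sum>j\<in>A \<inter> {j. j \<notin> Z}. h j)"
      using fA by (simp add: sum.If_cases)
    also have "A \<inter> {j. j \<notin> Z} = A - Z" by auto
    finally show "(\<Sum>j\<in>A - Z. h j) = (\<Sum>j\<in>A. if j \<notin> Z then h j else 0)" by simp
  qed
  also have "\<dots> = (\<Sum>j\<in>A. \<Sum>Z\<in>Zs. if j \<notin> Z then h j else 0)" by (rule sum.swap)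
  also have "\<dots> = (\<Sum>j\<in>A. h j * card {Z \<in> Zs. j \<notin> Z})"
  proof (rule sum.cong[OF refl])
    fix j assume "j \<in> A"
    have "(\<Sum>Z\<in>Zs. if j \<notin> Z then h j else 0) = (\<Sum>Z\<in>Zs \<inter> {Z. j \<notin> Z}. h j)"
      using fZs by (simp add: sum.If_cases)
    also have "Zs \<inter> {Z. j \<notin> Z} = {Z \<in> Zs. j \<notin> Z}" by auto
    finally show "(\<Sum>Z\<in>Zs. if j \<notin> Z then h j else 0) = h j * card {Z \<in> Zs. j \<notin> Z}" by simp
  qed
  also have "\<dots> = (\<Sum>j\<in>A. h j) * ((a - 1) choose z)"
    using cj by (simp add: sum_distrib_right)
  finally have ineq: "(a choose z) * m \<le> (\<Sum>j\<in>A. h j) * ((a - 1) choose z)" .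
  have "(a - z) * ((a choose z) * m) \<le> (a - z) * ((\<Sum>j\<in>A. h j) * ((a - 1) choose z))"
    using ineq by simp
  moreover have "(a - z) * ((a choose z) * m) = ((a - 1) choose z) * (a * m)"
    using binomial_absorb_comp[of a z] by (simp add: algebra_simps)
  moreover have "(a - z) * ((\<Sum>j\<in>A. h j) * ((a - 1) choose z)) = ((a - 1) choose z) * ((a - z) * (\<Sum>j\<in>A. h j))"
    by (simp add: algebra_simps)
  ultimately have "((a - 1) choose z) * (a * m) \<le> ((a - 1) choose z) * ((a - z) * (\<Sum>j\<in>A. h j))" by simp
  moreover have "(a - 1) choose z > 0" using zA a_def by simp
  ultimately show ?thesis unfolding a_def by simp
qed

theorem theorem5:
  fixes t n z q m :: nat and w :: "nat \<Rightarrow> nat" and Ks :: "cmat list"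
    and A :: "nat set" and T :: "nat \<Rightarrow> nat set"
  assumes "z < t" and "t \<le> n" and "2 \<le> q"
    and "qss_scheme t n z q m w Ks"
    and "A \<subseteq> {1..n}" and "authorized q n m w Ks A"
    and "\<forall>j\<in>A. T j \<subseteq> share_block w j"
    and "recoverable q n m w Ks (\<Union>j\<in>A. T j)"
  shows "real (\<Sum>j\<in>A. card (T j)) \<ge> real (card A) * real m / (real (card A) - real z)"
proof (cases "z < card A")
  case True
  have fA: "finite A" using assms(5) finite_subset by blast
  have nat_ineq: "card A * m \<le> (card A - z) * (\<Sum>j\<in>A. card (T j))"
  proof (rule averaging[OF fA True])
    fix Z assume "Z \<subseteq> A" "card Z = z"
    then show "m \<le> (\<Sum>j\<in>A - Z. card (T j))"
      using per_Z[OF assms(3,4,5,7,8)] by simp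
  qed
  have pos: "real (card A) - real z > 0" using True by simp
  have "real (card A) * real m \<le> (real (card A) - real z) * real (\<Sum>j\<in>A. card (T j))"
  proof -
    have "real (card A * m) \<le> real ((card A - z) * (\<Sum>j\<in>A. card (T j)))"
      using nat_ineq by (simp only: of_nat_le_iff)
    then show ?thesis using True by (simp add: of_nat_diff)
  qed
  then show ?thesis using pos by (simp add: pos_divide_le_eq mult.commute)
next
  case False
  then have "real (card A) - real z \<le> 0" by simp
  then have "real (card A) * real m / (real (card A) - real z) \<le> 0"
    by (cases "real (card A) - real z = 0") (auto intro: divide_nonneg_neg)
  then show ?thesis by (rule order_trans) (simp add: sum_nonneg)
qed

end
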